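(* Let $F$ satisfy the standing assumptions below, $\beta\in(0,1)$, $D>0$, $\mu\ge0$, and run the general conversion scheme below with any online learner and any choices of $\mathbf{x}_t$. Let $\mathbf{u}_t:=-D\frac{\sum_{s=1}^t\beta^{t-s}\nabla F(\mathbf{y}_s)}{\|\sum_{s=1}^t\beta^{t-s}\nabla F(\mathbf{y}_s)\|}$, and for $t\in[T]$ let $\mathbf{Y}_t$ be the random point equal to $\mathbf{y}_s$ with probability $q_{t,s}:=\beta^{t-s}\frac{1-\beta}{1-\beta^t}$, $s=1,\dots,t$ (so $\mathbb{E}_{\mathbf{Y}_t}\nabla F(\mathbf{Y}_t)=\sum_{s=1}^tq_{t,s}\nabla F(\mathbf{y}_s)$). Then $$\mathbb{E}_\tau\|\mathbb{E}_{\mathbf{Y}_\tau}\nabla F(\mathbf{Y}_\tau)\|\le\frac{\beta\,\mathbb{E}[\mathrm{Regret}^\beta_T(\mathbf{u}_T)]+(1-\beta)\sum_{t=1}^T\mathbb{E}[\mathrm{Regret}^\beta_t(\mathbf{u}_t)]}{DT}-\frac{\mu\,\mathbb{E}\sum_{t=1}^T\|\Delta_t\|^2}{2DT}+\frac{\mathbb{E}\sum_{t=1}^T(F(\mathbf{x}_t)-F(\mathbf{w}_t))}{DT}+\frac{\sigma\beta}{T\sqrt{1-\beta}}+\sigma\sqrt{1-\beta}+\frac{\mu D}{2}.$$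
   Context: Norms are Euclidean. Standing assumptions: $F:\mathbb{R}^d\to\mathbb{R}$ differentiable; for all $\mathbf{x},\mathbf{w}$, $F(\mathbf{x})-F(\mathbf{w})=\int_0^1\langle\nabla F(\mathbf{w}+t(\mathbf{x}-\mathbf{w})),\mathbf{x}-\mathbf{w}\rangle\,dt$; $\|\nabla F\|\le G$ everywhere. The stochastic gradient oracle at $\mathbf{x}$ independently returns $\mathbf{g}$ with $\mathbb{E}\mathbf{g}=\nabla F(\mathbf{x})$, $\mathbb{E}\|\mathbf{g}-\nabla F(\mathbf{x})\|^2\le\sigma^2$. General conversion scheme: input $\mathbf{x}_0=\mathbf{w}_0$, $T$, $\mu\ge0$, online learner $\mathcal{A}$ (output $\Delta_t$ at round $t$ based on $\ell_1,\dots,\ell_{t-1}$). For $t=1,\dots,T$: receive $\Delta_t$; choose $\mathbf{x}_t$ arbitrarily (may depend on everything so far including $\Delta_t$, not on $s_t,\mathbf{g}_t$ or later randomness); $\mathbf{w}_t=\mathbf{x}_t+\Delta_t$; $\mathbf{y}_t=\mathbf{x}_t+s_t\Delta_t$, $s_t\sim\mathrm{Unif}[0,1]$ i.i.d.; $\mathbf{g}_t$ = oracle output at $\mathbf{y}_t$; send $\ell_t(\mathbf{v})=\langle\mathbf{g}_t,\mathbf{v}\rangle+\frac\mu2\|\mathbf{v}\|^2$ to $\mathcal{A}$. $\mathrm{Regret}^\beta_t(\mathbf{u}) := \sum_{s=1}^t\beta^{t-s}(\ell_s(\Delta_s)-\ell_s(\mathbf{u}))$. $\tau$ is independent of the algorithm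 with $\Pr(\tau=t)=\frac{1-\beta^t}{T}$ ($t\le T-1$), $\Pr(\tau=T)=\frac{1-\beta^T}{(1-\beta)T}$; $\mathbb{E}_\tau$ is expectation over $\tau$ and all algorithmic randomness. *)

theory Defs
  imports "HOL-Probability.Probability"
begin

text \<open>Round t (t = 1,2,...) uses the
  component omega t = (s_t, xi_t): s_t ~ Unif[0,1] and xi_t ~ N the internal randomness of
  the stochastic oracle; all components are independent (product measure).\<close>
definition conv_space :: "'w measure \<Rightarrow> (nat \<Rightarrow> real \<times> 'w) measure" where
  "conv_space N = (\<Pi>\<^sub>M i\<in>UNIV. (uniform_measure lborel {0..1::real}) \<Otimes>\<^sub>M N)"

definition cs_y :: "(nat \<Rightarrow> (nat \<Rightarrow> real \<times> 'w) \<Rightarrow> 'a::real_normed_vector) \<Rightarrow>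
    (nat \<Rightarrow> (nat \<Rightarrow> real \<times> 'w) \<Rightarrow> 'a) \<Rightarrow> nat \<Rightarrow> (nat \<Rightarrow> real \<times> 'w) \<Rightarrow> 'a" where
  "cs_y x \<Delta> t \<omega> = x t \<omega> + fst (\<omega> t) *\<^sub>R \<Delta> t \<omega>"

definition cs_w :: "(nat \<Rightarrow> (nat \<Rightarrow> real \<times> 'w) \<Rightarrow> 'a::real_normed_vector) \<Rightarrow>
    (nat \<Rightarrow> (nat \<Rightarrow> real \<times> 'w) \<Rightarrow> 'a) \<Rightarrow> nat \<Rightarrow> (nat \<Rightarrow> real \<times> 'w) \<Rightarrow> 'a" where
  "cs_w x \<Delta> t \<omega> = x t \<omega> + \<Delta> t \<omega>"

definition cs_g :: "('a \<Rightarrow> 'w \<Rightarrow> 'a) \<Rightarrow> (nat \<Rightarrow> (nat \<Rightarrow> real \<times> 'w) \<Rightarrow> 'a::real_normed_vector) \<Rightarrow>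
    (nat \<Rightarrow> (nat \<Rightarrow> real \<times> 'w) \<Rightarrow> 'a) \<Rightarrow> nat \<Rightarrow> (nat \<Rightarrow> real \<times> 'w) \<Rightarrow> 'a" where
  "cs_g orc x \<Delta> t \<omega> = orc (cs_y x \<Delta> t \<omega>) (snd (\<omega> t))"

definition cs_loss :: "real \<Rightarrow> 'a::real_inner \<Rightarrow> 'a \<Rightarrow> real" where
  "cs_loss \<mu> g v = inner g v + \<mu> / 2 * (norm v)\<^sup>2"

definition cs_regret :: "real \<Rightarrow> real \<Rightarrow> ('a \<Rightarrow> 'w \<Rightarrow> 'a) \<Rightarrow>
    (nat \<Rightarrow> (nat \<Rightarrow> real \<times> 'w) \<Rightarrow> 'a::real_inner) \<Rightarrow> (nat \<Rightarrow> (nat \<Rightarrow> real \<times> 'w) \<Rightarrow> 'a) \<Rightarrow>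
    nat \<Rightarrow> 'a \<Rightarrow> (nat \<Rightarrow> real \<times> 'w) \<Rightarrow> real" where
  "cs_regret \<beta> \<mu> orc x \<Delta> t u \<omega> =
     (\<Sum>s=1..t. \<beta> ^ (t - s) *
        (cs_loss \<mu> (cs_g orc x \<Delta> s \<omega>) (\<Delta> s \<omega>) - cs_loss \<mu> (cs_g orc x \<Delta> s \<omega>) u))"

text \<open>u_t = - D S / |S| with S = sum_{s=1}^t beta^(t-s) grad F(y_s)  (u_t = 0 if S = 0)\<close>
definition cs_u :: "real \<Rightarrow> real \<Rightarrow> ('a \<Rightarrow> 'a) \<Rightarrow>
    (nat \<Rightarrow> (nat \<Rightarrow> real \<times> 'w) \<Rightarrow> 'a::real_normed_vector) \<Rightarrow> (nat \<Rightarrow> (nat \<Rightarrow> real \<times> 'w) \<Rightarrow> 'a) \<Rightarrow>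
    nat \<Rightarrow> (nat \<Rightarrow> real \<times> 'w) \<Rightarrow> 'a" where
  "cs_u D \<beta> gradF x \<Delta> t \<omega> =
     (let S = (\<Sum>s=1..t. \<beta> ^ (t - s) *\<^sub>R gradF (cs_y x \<Delta> s \<omega>)) in - ((D / norm S) *\<^sub>R S))"

definition tau_prob :: "real \<Rightarrow> nat \<Rightarrow> nat \<Rightarrow> real" where
  "tau_prob \<beta> T t = (if t < T then (1 - \<beta> ^ t) / T else (1 - \<beta> ^ T) / ((1 - \<beta>) * T))"

definition cs_q :: "real \<Rightarrow> nat \<Rightarrow> nat \<Rightarrow> real" where
  "cs_q \<beta> t s = \<beta> ^ (t - s) * (1 - \<beta>) / (1 - \<beta> ^ t)"

end

theory Submission
  imports Defs
begin

locale cv =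
  fixes F :: "'a::euclidean_space \<Rightarrow> real"
    and gradF :: "'a \<Rightarrow> 'a"
    and G \<sigma> \<beta> D \<mu> :: real
    and T :: nat
    and N :: "'w measure"
    and orc :: "'a \<Rightarrow> 'w \<Rightarrow> 'a"
    and A :: "nat \<Rightarrow> (nat \<Rightarrow> 'a) \<Rightarrow> 'a"
    and x \<Delta> :: "nat \<Rightarrow> (nat \<Rightarrow> real \<times> 'w) \<Rightarrow> 'a"
  assumes grad: "\<And>z. (F has_derivative (\<lambda>h. inner (gradF z) h)) (at z)"
    and ftc: "\<And>z v. ((\<lambda>r. inner (gradF (v + r *\<^sub>R (z - v))) (z - v)) has_integral (F z - F v)) {0..1}"
    and gradbd: "\<And>z. norm (gradF z) \<le> G"
    and N_prob: "prob_space N"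
    and orc_meas: "(\<lambda>p. orc (fst p) (snd p)) \<in> borel_measurable (borel \<Otimes>\<^sub>M N)"
    and orc_int: "\<And>z. integrable N (orc z)"
    and orc_unbiased: "\<And>z. (\<integral>\<xi>. orc z \<xi> \<partial>N) = gradF z"
    and orc_var_int: "\<And>z. integrable N (\<lambda>\<xi>. (norm (orc z \<xi> - gradF z))\<^sup>2)"
    and orc_var: "\<And>z. (\<integral>\<xi>. (norm (orc z \<xi> - gradF z))\<^sup>2 \<partial>N) \<le> \<sigma>\<^sup>2"
    and sigma: "\<sigma> \<ge> 0"
    and learner: "\<And>t \<omega>. 1 \<le> t \<Longrightarrow>
        \<Delta> t \<omega> = A t (\<lambda>i. if 1 \<le> i \<and> i < t then cs_g orc x \<Delta> i \<omega> else 0)"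
    and x_adapted: "\<And>t \<omega> \<omega>'. 1 \<le> t \<Longrightarrow> (\<forall>i. 1 \<le> i \<and> i < t \<longrightarrow> \<omega> i = \<omega>' i) \<Longrightarrow>
        x t \<omega> = x t \<omega>'"
    and x_meas: "\<And>t. 1 \<le> t \<Longrightarrow> x t \<in> borel_measurable (conv_space N)"
    and \<Delta>_meas: "\<And>t. 1 \<le> t \<Longrightarrow> \<Delta> t \<in> borel_measurable (conv_space N)"
    and \<Delta>_sq_int: "\<And>t. 1 \<le> t \<Longrightarrow> t \<le> T \<Longrightarrow> integrable (conv_space N) (\<lambda>\<omega>. (norm (\<Delta> t \<omega>))\<^sup>2)"
    and beta: "0 < \<beta>" "\<beta> < 1"
    and Dpos: "D > 0"
    and mu: "\<mu> \<ge> 0"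
    and T: "T \<ge> 1"
begin

abbreviation U where "U \<equiv> uniform_measure lborel {0..1::real}"
abbreviation K where "K \<equiv> U \<Otimes>\<^sub>M N"
abbreviation M where "M \<equiv> conv_space N"

lemma U_prob: "prob_space U"
  by (rule prob_space_uniform_measure) auto

lemma K_prob: "prob_space K"
  by (rule prob_space_pair[OF U_prob N_prob])

lemma M_eq: "M = PiM UNIV (\<lambda>_. K)"
  by (simp add: conv_space_def)

lemma M_prob: "prob_space M"
  unfolding M_eq by (rule prob_space_PiM) (rule K_prob)

lemma sets_U[simp]: "sets U = sets borel" by simp

lemma gradF_eq: "gradF = (\<lambda>z. \<integral>\<xi>. orc z \<xi> \<partial>N)"
  using orc_unbiased by auto

lemma gradF_meas[measurable]: "gradF \<in> borel_measurable borel"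
proof -
  interpret N: prob_space N by (rule N_prob)
  have "(\<lambda>z. \<integral>\<xi>. orc z \<xi> \<partial>N) \<in> borel_measurable borel"
    by (rule N.borel_measurable_lebesgue_integral) (use orc_meas in \<open>simp add: case_prod_beta'\<close>)
  then show ?thesis using gradF_eq by simp
qed

lemma comp_meas[measurable]: "(\<lambda>\<omega>. \<omega> t) \<in> measurable M K"
  unfolding M_eq by (rule measurable_component_singleton) simp

lemma fst_K_meas[measurable]: "fst \<in> borel_measurable K"
proof -
  have e: "measurable K U = measurable K borel" by (rule measurable_cong_sets) auto
  show "fst \<in> borel_measurable K" using measurable_fst[of U N] e by simp
qed

lemma snd_K_meas[measurable]: "snd \<in> measurable K N"
  by (rule measurable_snd)

lemma s_meas[measurable]: "(\<lambda>\<omega>. fst (\<omega> t)) \<in> borel_measurable M"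
proof -
  have "fst \<in> borel_measurable K" by (rule fst_K_meas)
  then show ?thesis using comp_meas by (rule measurable_compose[rotated])
qed

lemma xi_meas[measurable]: "(\<lambda>\<omega>. snd (\<omega> t)) \<in> measurable M N"
  using comp_meas by (rule measurable_compose) (rule measurable_snd)

lemma y_meas: "1 \<le> t \<Longrightarrow> cs_y x \<Delta> t \<in> borel_measurable M"
proof -
  assume t: "1 \<le> t"
  have [measurable]: "x t \<in> borel_measurable M" "\<Delta> t \<in> borel_measurable M"
    using x_meas \<Delta>_meas t by auto
  show ?thesis unfolding cs_y_def[abs_def] by measurable
qed

lemma w_meas: "1 \<le> t \<Longrightarrow> cs_w x \<Delta> t \<in> borel_measurable M"
proof -
  assume t: "1 \<le> t"
  have [measurable]: "x t \<in> borel_measurable M" "\<Delta> t \<in> borel_measurable M"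
    using x_meas \<Delta>_meas t by auto
  show ?thesis unfolding cs_w_def[abs_def] by measurable
qed

lemma g_meas: "1 \<le> t \<Longrightarrow> cs_g orc x \<Delta> t \<in> borel_measurable M"
proof -
  assume t: "1 \<le> t"
  have "(\<lambda>\<omega>. (cs_y x \<Delta> t \<omega>, snd (\<omega> t))) \<in> measurable M (borel \<Otimes>\<^sub>M N)"
    by (rule measurable_Pair[OF y_meas[OF t] xi_meas])
  from measurable_compose[OF this orc_meas] show ?thesis
    unfolding cs_g_def[abs_def] by simp
qed

end

context cv begin

lemma dep: "1 \<le> t \<Longrightarrow> (\<forall>i. 1 \<le> i \<and> i < t \<longrightarrow> \<omega> i = \<omega>' i) \<Longrightarrow> \<Delta> t \<omega> = \<Delta> t \<omega>'"
proof (induction t rule: less_induct)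
  case (less t)
  have "(\<lambda>i. if 1 \<le> i \<and> i < t then cs_g orc x \<Delta> i \<omega> else 0) =
        (\<lambda>i. if 1 \<le> i \<and> i < t then cs_g orc x \<Delta> i \<omega>' else 0)"
  proof (rule ext)
    fix i
    show "(if 1 \<le> i \<and> i < t then cs_g orc x \<Delta> i \<omega> else 0) =
        (if 1 \<le> i \<and> i < t then cs_g orc x \<Delta> i \<omega>' else 0)"
    proof (cases "1 \<le> i \<and> i < t")
      case True
      have h: "\<forall>j. 1 \<le> j \<and> j < i \<longrightarrow> \<omega> j = \<omega>' j" using less.prems True by auto
      have "x i \<omega> = x i \<omega>'" using x_adapted[of i \<omega> \<omega>'] h True by auto
      moreover have "\<Delta> i \<omega> = \<Delta> i \<omega>'" using less.IH[of i] h True by auto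
      moreover have "\<omega> i = \<omega>' i" using less.prems True by auto
      ultimately show ?thesis using True by (simp add: cs_g_def cs_y_def)
    next
      case False
      show ?thesis by (simp only: if_not_P[OF False])
    qed
  qed
  then show ?case using learner[of t] less.prems by simp
qed

lemma \<Delta>_upd: "1 \<le> t \<Longrightarrow> t \<le> r \<Longrightarrow> \<Delta> t (\<omega> (r := z)) = \<Delta> t \<omega>"
  by (rule dep) auto

lemma x_upd: "1 \<le> t \<Longrightarrow> t \<le> r \<Longrightarrow> x t (\<omega> (r := z)) = x t \<omega>"
  by (rule x_adapted) auto

lemma y_upd: "1 \<le> s \<Longrightarrow> s < r \<Longrightarrow> cs_y x \<Delta> s (\<omega> (r := z)) = cs_y x \<Delta> s \<omega>"
  by (simp add: cs_y_def \<Delta>_upd x_upd)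

lemma g_upd: "1 \<le> s \<Longrightarrow> s < r \<Longrightarrow> cs_g orc x \<Delta> s (\<omega> (r := z)) = cs_g orc x \<Delta> s \<omega>"
  by (simp add: cs_g_def y_upd)

lemma y_upd_self: "1 \<le> r \<Longrightarrow> cs_y x \<Delta> r (\<omega> (r := z)) = x r \<omega> + fst z *\<^sub>R \<Delta> r \<omega>"
  by (simp add: cs_y_def \<Delta>_upd x_upd)

lemma g_upd_self: "1 \<le> r \<Longrightarrow> cs_g orc x \<Delta> r (\<omega> (r := z)) = orc (x r \<omega> + fst z *\<^sub>R \<Delta> r \<omega>) (snd z)"
  by (simp add: cs_g_def y_upd_self)

lemma upd_meas[measurable]: "(\<lambda>(z, \<omega>). \<omega> (r := z)) \<in> measurable (K \<Otimes>\<^sub>M M) M"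
proof -
  have "(\<lambda>p. (snd p)(r := fst p)) \<in> measurable (K \<Otimes>\<^sub>M M) (PiM UNIV (\<lambda>_. K))"
    by (rule measurable_fun_upd[where J=UNIV]) (auto simp: M_eq)
  then show ?thesis by (simp add: M_eq case_prod_beta')
qed

lemma res_distr: "distr (K \<Otimes>\<^sub>M M) M (\<lambda>(z, \<omega>). \<omega> (r := z)) = M"
  using distr_pair_PiM_eq_PiM[of UNIV "\<lambda>_. K" r] K_prob by (simp add: M_eq)

lemma res_int:
  fixes h :: "_ \<Rightarrow> 'b::{banach, second_countable_topology}"
  assumes h: "integrable M h"
  shows "integrable (K \<Otimes>\<^sub>M M) (\<lambda>(z, \<omega>). h (\<omega> (r := z)))"
    and "(\<integral>\<omega>. h \<omega> \<partial>M) = (\<integral>\<omega>. (\<integral>z. h (\<omega> (r := z)) \<partial>K) \<partial>M)"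
proof -
  interpret K: prob_space K by (rule K_prob)
  interpret MM: prob_space M by (rule M_prob)
  interpret P: pair_sigma_finite K M ..
  have hm[measurable]: "h \<in> borel_measurable M" using h by auto
  have "integrable (distr (K \<Otimes>\<^sub>M M) M (\<lambda>(z, \<omega>). \<omega> (r := z))) h"
    using h by (simp add: res_distr)
  then show i: "integrable (K \<Otimes>\<^sub>M M) (\<lambda>(z, \<omega>). h (\<omega> (r := z)))"
    by (subst (asm) integrable_distr_eq) (auto simp: case_prod_beta')
  have "(\<integral>\<omega>. h \<omega> \<partial>M) = integral\<^sup>L (distr (K \<Otimes>\<^sub>M M) M (\<lambda>(z, \<omega>). \<omega> (r := z))) h"
    by (simp add: res_distr)
  also have "\<dots> = integral\<^sup>L (K \<Otimes>\<^sub>M M) (\<lambda>p. h ((\<lambda>(z, \<omega>). \<omega> (r := z)) p))"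
    by (rule integral_distr) auto
  also have "\<dots> = (\<integral>\<omega>. (\<integral>z. h (\<omega> (r := z)) \<partial>K) \<partial>M)"
    using P.integral_snd[of "\<lambda>z \<omega>. h (\<omega> (r := z))"] i by (simp add: case_prod_beta')
  finally show "(\<integral>\<omega>. h \<omega> \<partial>M) = (\<integral>\<omega>. (\<integral>z. h (\<omega> (r := z)) \<partial>K) \<partial>M)" .
qed

lemma res_nn:
  assumes h[measurable]: "h \<in> borel_measurable M"
  shows "(\<integral>\<^sup>+\<omega>. h \<omega> \<partial>M) = (\<integral>\<^sup>+\<omega>. (\<integral>\<^sup>+z. h (\<omega> (r := z)) \<partial>K) \<partial>M)"
proof -
  interpret K: prob_space K by (rule K_prob)
  interpret MM: prob_space M by (rule M_prob)
  interpret P: pair_sigma_finite K M ..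
  have "(\<integral>\<^sup>+\<omega>. h \<omega> \<partial>M) = integral\<^sup>N (distr (K \<Otimes>\<^sub>M M) M (\<lambda>(z, \<omega>). \<omega> (r := z))) h"
    by (simp add: res_distr)
  also have "\<dots> = (\<integral>\<^sup>+p. h ((\<lambda>(z, \<omega>). \<omega> (r := z)) p) \<partial>(K \<Otimes>\<^sub>M M))"
    by (rule nn_integral_distr) auto
  also have "\<dots> = (\<integral>\<^sup>+\<omega>. (\<integral>\<^sup>+z. h (\<omega> (r := z)) \<partial>K) \<partial>M)"
    by (subst P.nn_integral_snd[symmetric]) (auto simp: case_prod_beta')
  finally show ?thesis .
qed

lemma K_fst:
  fixes f :: "real \<Rightarrow> 'b::{banach, second_countable_topology}"
  assumes [measurable]: "f \<in> borel_measurable borel"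
  shows "(\<integral>z. f (fst z) \<partial>K) = (\<integral>s. f s \<partial>U)"
proof -
  interpret N: prob_space N by (rule N_prob)
  have "(\<integral>s. f s \<partial>U) = integral\<^sup>L (distr K U fst) f"
    by (simp add: N.distr_pair_fst)
  also have "\<dots> = (\<integral>z. f (fst z) \<partial>K)"
    by (rule integral_distr) auto
  finally show ?thesis by simp
qed

lemma U_integral:
  fixes f :: "real \<Rightarrow> real"
  assumes [measurable]: "f \<in> borel_measurable borel" and bnd: "\<And>s. \<bar>f s\<bar> \<le> B"
    and hi: "(f has_integral I) {0..1}"
  shows "(\<integral>s. f s \<partial>U) = I"
proof -
  have "U = density lborel (\<lambda>s. ennreal (indicator {0..1} s))"
    unfolding uniform_measure_def by (intro density_cong) (auto simp: indicator_def)
  then have "(\<integral>s. f s \<partial>U) = (\<integral>s. indicator {0..1} s *\<^sub>R f s \<partial>lborel)"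
    by (simp add: integral_density)
  also have "\<dots> = (LINT s:{0..1}|lborel. f s)"
    by (simp add: set_lebesgue_integral_def)
  also have "\<dots> = integral {0..1} f"
  proof (rule set_borel_integral_eq_integral)
    show "set_integrable lborel {0..1} f"
      unfolding set_integrable_def
      by (rule integrableI_bounded_set_indicator[where B=B]) (auto simp: bnd)
  qed
  also have "\<dots> = I" using hi by (rule integral_unique)
  finally show ?thesis .
qed

end

context cv begin

definition eps :: "nat \<Rightarrow> (nat \<Rightarrow> real \<times> 'w) \<Rightarrow> 'a" where
  "eps t \<omega> = cs_g orc x \<Delta> t \<omega> - gradF (cs_y x \<Delta> t \<omega>)"

lemma G_nonneg: "0 \<le> G"
  using gradbd[of 0] norm_ge_zero[of "gradF 0"] by linarith

lemma F_lip: "\<bar>F z - F v\<bar> \<le> G * norm (z - v)"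
proof -
  have "norm (F z - F v) \<le> G * norm (z - v) * Henstock_Kurzweil_Integration.content {0..1::real}"
  proof (rule has_integral_bound_real[where S="{}"])
    show "0 \<le> G * norm (z - v)" using G_nonneg by simp
    show "((\<lambda>r. inner (gradF (v + r *\<^sub>R (z - v))) (z - v)) has_integral (F z - F v)) {0..1}"
      by (rule ftc)
    fix r :: real
    have "norm (inner (gradF (v + r *\<^sub>R (z - v))) (z - v)) \<le> norm (gradF (v + r *\<^sub>R (z - v))) * norm (z - v)"
      using Cauchy_Schwarz_ineq2 by simp
    also have "\<dots> \<le> G * norm (z - v)"
      using gradbd by (intro mult_right_mono) auto
    finally show "norm (inner (gradF (v + r *\<^sub>R (z - v))) (z - v)) \<le> G * norm (z - v)" .
  qed simp
  then show ?thesis by simp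
qed

lemma F_cont: "continuous_on UNIV F"
  using grad by (meson continuous_at_imp_continuous_on has_derivative_continuous)

lemma F_meas[measurable]: "F \<in> borel_measurable borel"
  using F_cont by (rule borel_measurable_continuous_onI)

lemma eps_meas: "1 \<le> t \<Longrightarrow> eps t \<in> borel_measurable M"
proof -
  assume t: "1 \<le> t"
  have [measurable]: "cs_g orc x \<Delta> t \<in> borel_measurable M" "cs_y x \<Delta> t \<in> borel_measurable M"
    using g_meas y_meas t by auto
  show ?thesis unfolding eps_def[abs_def] by measurable
qed

lemma eps_upd: "1 \<le> s \<Longrightarrow> s < r \<Longrightarrow> eps s (\<omega> (r := z)) = eps s \<omega>"
  by (simp add: eps_def g_upd y_upd)

lemma eps_upd_self: "1 \<le> r \<Longrightarrow> eps r (\<omega> (r := z)) =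
   orc (x r \<omega> + fst z *\<^sub>R \<Delta> r \<omega>) (snd z) - gradF (x r \<omega> + fst z *\<^sub>R \<Delta> r \<omega>)"
  by (simp add: eps_def g_upd_self y_upd_self)

lemma orc_K_meas[measurable]:
  "(\<lambda>z. orc (a + fst z *\<^sub>R b) (snd z)) \<in> borel_measurable K"
proof -
  have "(\<lambda>z. (a + fst z *\<^sub>R b, snd z)) \<in> measurable K (borel \<Otimes>\<^sub>M N)"
    by measurable
  from measurable_compose[OF this orc_meas] show ?thesis by simp
qed

lemma eps_sq_nn: "1 \<le> t \<Longrightarrow> (\<integral>\<^sup>+\<omega>. ennreal ((norm (eps t \<omega>))\<^sup>2) \<partial>M) \<le> ennreal (\<sigma>\<^sup>2)"
proof -
  assume t: "1 \<le> t"
  have em[measurable]: "eps t \<in> borel_measurable M" by (rule eps_meas[OF t])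
  interpret N: prob_space N by (rule N_prob)
  interpret UU: prob_space U by (rule U_prob)
  interpret P: pair_sigma_finite U N ..
  have inner: "(\<integral>\<^sup>+z. ennreal ((norm (orc (a + fst z *\<^sub>R b) (snd z) - gradF (a + fst z *\<^sub>R b)))\<^sup>2) \<partial>K)
      \<le> ennreal (\<sigma>\<^sup>2)" for a b
  proof -
    have "(\<integral>\<^sup>+z. ennreal ((norm (orc (a + fst z *\<^sub>R b) (snd z) - gradF (a + fst z *\<^sub>R b)))\<^sup>2) \<partial>K)
      = (\<integral>\<^sup>+s. (\<integral>\<^sup>+\<xi>. ennreal ((norm (orc (a + s *\<^sub>R b) \<xi> - gradF (a + s *\<^sub>R b)))\<^sup>2) \<partial>N) \<partial>U)"
      by (subst N.nn_integral_fst[symmetric]) (auto)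
    also have "\<dots> \<le> (\<integral>\<^sup>+s. ennreal (\<sigma>\<^sup>2) \<partial>U)"
    proof (rule nn_integral_mono)
      fix s
      have "(\<integral>\<^sup>+\<xi>. ennreal ((norm (orc (a + s *\<^sub>R b) \<xi> - gradF (a + s *\<^sub>R b)))\<^sup>2) \<partial>N)
          = ennreal (\<integral>\<xi>. (norm (orc (a + s *\<^sub>R b) \<xi> - gradF (a + s *\<^sub>R b)))\<^sup>2 \<partial>N)"
        by (rule nn_integral_eq_integral[OF orc_var_int]) auto
      also have "\<dots> \<le> ennreal (\<sigma>\<^sup>2)" using orc_var by (intro ennreal_leI) auto
      finally show "(\<integral>\<^sup>+\<xi>. ennreal ((norm (orc (a + s *\<^sub>R b) \<xi> - gradF (a + s *\<^sub>R b)))\<^sup>2) \<partial>N) \<le> ennreal (\<sigma>\<^sup>2)" .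
    qed
    also have "\<dots> = ennreal (\<sigma>\<^sup>2)" by (simp add: UU.emeasure_space_1)
    finally show ?thesis .
  qed
  have "(\<integral>\<^sup>+\<omega>. ennreal ((norm (eps t \<omega>))\<^sup>2) \<partial>M)
      = (\<integral>\<^sup>+\<omega>. (\<integral>\<^sup>+z. ennreal ((norm (eps t (\<omega> (t := z))))\<^sup>2) \<partial>K) \<partial>M)"
    by (rule res_nn) (use em in measurable)
  also have "\<dots> \<le> (\<integral>\<^sup>+\<omega>. ennreal (\<sigma>\<^sup>2) \<partial>M)"
    by (rule nn_integral_mono) (simp add: eps_upd_self[OF t] inner)
  also have "\<dots> = ennreal (\<sigma>\<^sup>2)"
    using prob_space.emeasure_space_1[OF M_prob] by simp
  finally show ?thesis .
qed

lemma eps_sq_int: "1 \<le> t \<Longrightarrow> integrable M (\<lambda>\<omega>. (norm (eps t \<omega>))\<^sup>2)"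
proof -
  assume t: "1 \<le> t"
  show ?thesis
  proof (rule integrableI_bounded)
    have em[measurable]: "eps t \<in> borel_measurable M" by (rule eps_meas[OF t])
    show "(\<lambda>\<omega>. (norm (eps t \<omega>))\<^sup>2) \<in> borel_measurable M" by measurable
    have "(\<integral>\<^sup>+\<omega>. ennreal (norm ((norm (eps t \<omega>))\<^sup>2)) \<partial>M) = (\<integral>\<^sup>+\<omega>. ennreal ((norm (eps t \<omega>))\<^sup>2) \<partial>M)"
      by simp
    also have "\<dots> \<le> ennreal (\<sigma>\<^sup>2)" by (rule eps_sq_nn[OF t])
    finally show "(\<integral>\<^sup>+\<omega>. ennreal (norm ((norm (eps t \<omega>))\<^sup>2)) \<partial>M) < \<infinity>"
      using ennreal_less_top[of "\<sigma>\<^sup>2"] by (metis le_less_trans infinity_ennreal_def)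
  qed
qed

lemma eps_sq_bound: "1 \<le> t \<Longrightarrow> (\<integral>\<omega>. (norm (eps t \<omega>))\<^sup>2 \<partial>M) \<le> \<sigma>\<^sup>2"
proof -
  assume t: "1 \<le> t"
  have "ennreal (\<integral>\<omega>. (norm (eps t \<omega>))\<^sup>2 \<partial>M) = (\<integral>\<^sup>+\<omega>. ennreal ((norm (eps t \<omega>))\<^sup>2) \<partial>M)"
    by (rule nn_integral_eq_integral[OF eps_sq_int[OF t], symmetric]) auto
  also have "\<dots> \<le> ennreal (\<sigma>\<^sup>2)" by (rule eps_sq_nn[OF t])
  finally have "ennreal (\<integral>\<omega>. (norm (eps t \<omega>))\<^sup>2 \<partial>M) \<le> ennreal (\<sigma>\<^sup>2)" .
  then show ?thesis by (subst (asm) ennreal_le_iff) auto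
qed

lemma sq_int_imp_int:
  fixes f :: "_ \<Rightarrow> 'b::{banach, second_countable_topology}"
  assumes f[measurable]: "f \<in> borel_measurable M" and i: "integrable M (\<lambda>\<omega>. (norm (f \<omega>))\<^sup>2)"
  shows "integrable M f"
proof -
  interpret MM: prob_space M by (rule M_prob)
  have "integrable M (\<lambda>\<omega>. 1 + (norm (f \<omega>))\<^sup>2)" using i by simp
  then show ?thesis
  proof (rule Bochner_Integration.integrable_bound)
    show "AE \<omega> in M. norm (f \<omega>) \<le> norm (1 + (norm (f \<omega>))\<^sup>2)"
    proof (rule AE_I2)
      fix \<omega>
      have "norm (f \<omega>) \<le> 1 + (norm (f \<omega>))\<^sup>2"
      proof (cases "norm (f \<omega>) \<le> 1")
        case True
        then show ?thesis using zero_le_power2[of "norm (f \<omega>)"] by linarith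
      next
        case False
        have "norm (f \<omega>) * 1 \<le> norm (f \<omega>) * norm (f \<omega>)"
          by (rule mult_left_mono) (use False in auto)
        then show ?thesis by (simp add: power2_eq_square)
      qed
      then show "norm (f \<omega>) \<le> norm (1 + (norm (f \<omega>))\<^sup>2)" by simp
    qed
  qed (rule f)
qed

lemma inner_amgm: "\<bar>inner a b\<bar> \<le> ((norm a)\<^sup>2 + (norm b)\<^sup>2) / 2"
proof -
  have "\<bar>inner a b\<bar> \<le> norm a * norm b" by (rule Cauchy_Schwarz_ineq2)
  moreover have "0 \<le> (norm a - norm b)\<^sup>2" by simp
  ultimately show ?thesis by (simp add: power2_eq_square algebra_simps)
qed

lemma inner_int:
  fixes f g :: "_ \<Rightarrow> 'a"
  assumes f[measurable]: "f \<in> borel_measurable M" and g[measurable]: "g \<in> borel_measurable M"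
    and fi: "integrable M (\<lambda>\<omega>. (norm (f \<omega>))\<^sup>2)" and gi: "integrable M (\<lambda>\<omega>. (norm (g \<omega>))\<^sup>2)"
  shows "integrable M (\<lambda>\<omega>. inner (f \<omega>) (g \<omega>))"
proof -
  have "integrable M (\<lambda>\<omega>. ((norm (f \<omega>))\<^sup>2 + (norm (g \<omega>))\<^sup>2) / 2)" using fi gi by simp
  then show ?thesis
  proof (rule Bochner_Integration.integrable_bound)
    show "AE \<omega> in M. norm (inner (f \<omega>) (g \<omega>)) \<le> norm (((norm (f \<omega>))\<^sup>2 + (norm (g \<omega>))\<^sup>2) / 2)"
      using inner_amgm by (intro AE_I2) simp
  qed measurable
qed

end

context cv begin

lemma zero:
  assumes r: "1 \<le> r" and V[measurable]: "V \<in> borel_measurable M"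
    and Vi: "integrable M (\<lambda>\<omega>. (norm (V \<omega>))\<^sup>2)"
    and Vu: "\<And>\<omega> z. V (\<omega> (r := z)) = V \<omega>"
  shows "integrable M (\<lambda>\<omega>. inner (eps r \<omega>) (V \<omega>))"
    and "(\<integral>\<omega>. inner (eps r \<omega>) (V \<omega>) \<partial>M) = 0"
proof -
  interpret N: prob_space N by (rule N_prob)
  interpret UU: prob_space U by (rule U_prob)
  interpret P: pair_sigma_finite U N ..
  show i: "integrable M (\<lambda>\<omega>. inner (eps r \<omega>) (V \<omega>))"
    by (rule inner_int[OF eps_meas[OF r] V eps_sq_int[OF r] Vi])
  have inner0: "(\<integral>z. inner (orc (a + fst z *\<^sub>R b) (snd z) - gradF (a + fst z *\<^sub>R b)) v \<partial>K) = 0"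
    for a b v
  proof (cases "integrable K (\<lambda>z. inner (orc (a + fst z *\<^sub>R b) (snd z) - gradF (a + fst z *\<^sub>R b)) v)")
    case True
    have "(\<integral>z. inner (orc (a + fst z *\<^sub>R b) (snd z) - gradF (a + fst z *\<^sub>R b)) v \<partial>K)
        = (\<integral>s. (\<integral>\<xi>. inner (orc (a + s *\<^sub>R b) \<xi> - gradF (a + s *\<^sub>R b)) v \<partial>N) \<partial>U)"
      using P.integral_fst'[OF True] by simp
    also have "\<dots> = (\<integral>s. 0 \<partial>U)"
    proof (rule Bochner_Integration.integral_cong[OF refl])
      fix s
      let ?c = "a + s *\<^sub>R b"
      have ii: "integrable N (\<lambda>\<xi>. orc ?c \<xi> - gradF ?c)"
        using orc_int by simp
      have "(\<integral>\<xi>. inner (orc ?c \<xi> - gradF ?c) v \<partial>N) = inner (\<integral>\<xi>. orc ?c \<xi> - gradF ?c \<partial>N) v"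
        using ii by simp
      also have "(\<integral>\<xi>. orc ?c \<xi> - gradF ?c \<partial>N) = (\<integral>\<xi>. orc ?c \<xi> \<partial>N) - (\<integral>\<xi>. gradF ?c \<partial>N)"
        by (rule Bochner_Integration.integral_diff) (auto simp: orc_int)
      also have "\<dots> = 0" by (simp add: orc_unbiased N.prob_space)
      finally show "(\<integral>\<xi>. inner (orc ?c \<xi> - gradF ?c) v \<partial>N) = 0" by simp
    qed
    finally show ?thesis by simp
  next
    case False
    then show ?thesis by (rule not_integrable_integral_eq)
  qed
  have "(\<integral>\<omega>. inner (eps r \<omega>) (V \<omega>) \<partial>M)
      = (\<integral>\<omega>. (\<integral>z. inner (eps r (\<omega> (r := z))) (V (\<omega> (r := z))) \<partial>K) \<partial>M)"
    by (rule res_int(2)[OF i])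
  also have "\<dots> = (\<integral>\<omega>. 0 \<partial>M)"
    by (rule Bochner_Integration.integral_cong[OF refl]) (simp add: eps_upd_self[OF r] Vu inner0)
  finally show "(\<integral>\<omega>. inner (eps r \<omega>) (V \<omega>) \<partial>M) = 0" by simp
qed

lemma norm\<Delta>_int: "1 \<le> t \<Longrightarrow> t \<le> T \<Longrightarrow> integrable M (\<lambda>\<omega>. norm (\<Delta> t \<omega>))"
  using sq_int_imp_int[OF \<Delta>_meas \<Delta>_sq_int] by auto

lemma p1:
  assumes t: "1 \<le> t" "t \<le> T"
  shows "integrable M (\<lambda>\<omega>. inner (gradF (cs_y x \<Delta> t \<omega>)) (\<Delta> t \<omega>))"
    and "integrable M (\<lambda>\<omega>. F (cs_w x \<Delta> t \<omega>) - F (x t \<omega>))"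
    and "(\<integral>\<omega>. inner (gradF (cs_y x \<Delta> t \<omega>)) (\<Delta> t \<omega>) \<partial>M) = (\<integral>\<omega>. F (cs_w x \<Delta> t \<omega>) - F (x t \<omega>) \<partial>M)"
proof -
  have [measurable]: "x t \<in> borel_measurable M" "\<Delta> t \<in> borel_measurable M"
    "cs_y x \<Delta> t \<in> borel_measurable M" "cs_w x \<Delta> t \<in> borel_measurable M"
    using t x_meas \<Delta>_meas y_meas w_meas by auto
  have bi: "integrable M (\<lambda>\<omega>. G * norm (\<Delta> t \<omega>))" using norm\<Delta>_int[OF t] by simp
  show i1: "integrable M (\<lambda>\<omega>. inner (gradF (cs_y x \<Delta> t \<omega>)) (\<Delta> t \<omega>))"
    using bi
  proof (rule Bochner_Integration.integrable_bound)
    show "AE \<omega> in M. norm (inner (gradF (cs_y x \<Delta> t \<omega>)) (\<Delta> t \<omega>)) \<le> norm (G * norm (\<Delta> t \<omega>))"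
    proof (rule AE_I2)
      fix \<omega>
      have "norm (inner (gradF (cs_y x \<Delta> t \<omega>)) (\<Delta> t \<omega>)) \<le> norm (gradF (cs_y x \<Delta> t \<omega>)) * norm (\<Delta> t \<omega>)"
        using Cauchy_Schwarz_ineq2 by simp
      also have "\<dots> \<le> G * norm (\<Delta> t \<omega>)" using gradbd by (intro mult_right_mono) auto
      finally show "norm (inner (gradF (cs_y x \<Delta> t \<omega>)) (\<Delta> t \<omega>)) \<le> norm (G * norm (\<Delta> t \<omega>))"
        using G_nonneg by simp
    qed
  qed measurable
  show "integrable M (\<lambda>\<omega>. F (cs_w x \<Delta> t \<omega>) - F (x t \<omega>))"
    using bi
  proof (rule Bochner_Integration.integrable_bound)
    show "AE \<omega> in M. norm (F (cs_w x \<Delta> t \<omega>) - F (x t \<omega>)) \<le> norm (G * norm (\<Delta> t \<omega>))"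
    proof (rule AE_I2)
      fix \<omega>
      have "\<bar>F (x t \<omega> + \<Delta> t \<omega>) - F (x t \<omega>)\<bar> \<le> G * norm (x t \<omega> + \<Delta> t \<omega> - x t \<omega>)"
        by (rule F_lip)
      then show "norm (F (cs_w x \<Delta> t \<omega>) - F (x t \<omega>)) \<le> norm (G * norm (\<Delta> t \<omega>))"
        using G_nonneg by (simp add: cs_w_def)
    qed
  qed measurable
  have inner: "(\<integral>z. inner (gradF (a + fst z *\<^sub>R b)) b \<partial>K) = F (a + b) - F a" for a b
  proof -
    have "(\<integral>z. inner (gradF (a + fst z *\<^sub>R b)) b \<partial>K) = (\<integral>s. inner (gradF (a + s *\<^sub>R b)) b \<partial>U)"
      by (rule K_fst[where f="\<lambda>s. inner (gradF (a + s *\<^sub>R b)) b"]) measurable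
    also have "\<dots> = F (a + b) - F a"
    proof (rule U_integral[where B="G * norm b"])
      show "(\<lambda>s. inner (gradF (a + s *\<^sub>R b)) b) \<in> borel_measurable borel" by measurable
      fix s
      have "\<bar>inner (gradF (a + s *\<^sub>R b)) b\<bar> \<le> norm (gradF (a + s *\<^sub>R b)) * norm b"
        by (rule Cauchy_Schwarz_ineq2)
      also have "\<dots> \<le> G * norm b" using gradbd by (intro mult_right_mono) auto
      finally show "\<bar>inner (gradF (a + s *\<^sub>R b)) b\<bar> \<le> G * norm b" .
    next
      show "((\<lambda>s. inner (gradF (a + s *\<^sub>R b)) b) has_integral F (a + b) - F a) {0..1}"
        using ftc[where z="a + b" and v=a] by simp
    qed
    finally show ?thesis .
  qed
  have "(\<integral>\<omega>. inner (gradF (cs_y x \<Delta> t \<omega>)) (\<Delta> t \<omega>) \<partial>M)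
     = (\<integral>\<omega>. (\<integral>z. inner (gradF (cs_y x \<Delta> t (\<omega> (t := z)))) (\<Delta> t (\<omega> (t := z))) \<partial>K) \<partial>M)"
    by (rule res_int(2)[OF i1])
  also have "\<dots> = (\<integral>\<omega>. F (cs_w x \<Delta> t \<omega>) - F (x t \<omega>) \<partial>M)"
    by (rule Bochner_Integration.integral_cong[OF refl])
       (simp add: y_upd_self[OF t(1)] \<Delta>_upd[OF t(1)] inner cs_w_def)
  finally show "(\<integral>\<omega>. inner (gradF (cs_y x \<Delta> t \<omega>)) (\<Delta> t \<omega>) \<partial>M) = (\<integral>\<omega>. F (cs_w x \<Delta> t \<omega>) - F (x t \<omega>) \<partial>M)" .
qed

lemma geo: "(1 - \<beta>) * (\<Sum>s=1..t. \<beta> ^ (t - s)) = 1 - \<beta> ^ t"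
proof (induction t)
  case 0
  then show ?case by simp
next
  case (Suc t)
  define S where "S = (\<Sum>s=1..t. \<beta> ^ (t - s))"
  have "(\<Sum>s=1..Suc t. \<beta> ^ (Suc t - s)) = (\<Sum>s=1..t. \<beta> ^ (Suc t - s)) + 1"
    by (simp add: sum.cl_ivl_Suc)
  also have "(\<Sum>s=1..t. \<beta> ^ (Suc t - s)) = \<beta> * S"
    unfolding S_def by (simp add: sum_distrib_left Suc_diff_le)
  finally have e: "(\<Sum>s=1..Suc t. \<beta> ^ (Suc t - s)) = \<beta> * S + 1" .
  have "(1 - \<beta>) * (\<Sum>s=1..Suc t. \<beta> ^ (Suc t - s)) = \<beta> * ((1 - \<beta>) * S) + (1 - \<beta>)"
    unfolding e by (simp add: algebra_simps)
  also have "\<dots> = \<beta> * (1 - \<beta> ^ t) + (1 - \<beta>)"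
    using Suc.IH unfolding S_def by simp
  also have "\<dots> = 1 - \<beta> ^ Suc t" by (simp add: algebra_simps)
  finally show ?case .
qed

lemma geo_le: "(\<Sum>s=1..t. \<beta> ^ (t - s)) \<le> 1 / (1 - \<beta>)"
proof -
  have "(1 - \<beta>) * (\<Sum>s=1..t. \<beta> ^ (t - s)) \<le> 1" using geo[of t] beta by simp
  then show ?thesis using beta by (simp add: field_simps)
qed

end

context cv begin

lemma eps_int: "1 \<le> s \<Longrightarrow> integrable M (eps s)"
  by (rule sq_int_imp_int[OF eps_meas eps_sq_int])

lemma cross_int: "1 \<le> s \<Longrightarrow> 1 \<le> r \<Longrightarrow> integrable M (\<lambda>\<omega>. inner (eps s \<omega>) (eps r \<omega>))"
  by (rule inner_int[OF eps_meas eps_meas eps_sq_int eps_sq_int])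

lemma cross:
  assumes s: "1 \<le> s" and r: "1 \<le> r" and sr: "s \<noteq> r"
  shows "(\<integral>\<omega>. inner (eps s \<omega>) (eps r \<omega>) \<partial>M) = 0"
proof (cases "s < r")
  case True
  have "(\<integral>\<omega>. inner (eps r \<omega>) (eps s \<omega>) \<partial>M) = 0"
    by (rule zero(2)[OF r eps_meas[OF s] eps_sq_int[OF s]]) (simp add: eps_upd[OF s True])
  then show ?thesis by (simp add: inner_commute)
next
  case False
  then have rs: "r < s" using sr by simp
  show ?thesis
    by (rule zero(2)[OF s eps_meas[OF r] eps_sq_int[OF r]]) (simp add: eps_upd[OF r rs])
qed

lemma noise:
  shows "integrable M (\<lambda>\<omega>. norm (\<Sum>s=1..t. \<beta> ^ (t - s) *\<^sub>R eps s \<omega>))"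
    and "(\<integral>\<omega>. norm (\<Sum>s=1..t. \<beta> ^ (t - s) *\<^sub>R eps s \<omega>) \<partial>M) \<le> \<sigma> / sqrt (1 - \<beta>)"
proof -
  interpret MM: prob_space M by (rule M_prob)
  define c where "c = (\<lambda>s. \<beta> ^ (t - s))"
  define X where "X = (\<lambda>\<omega>. \<Sum>s=1..t. c s *\<^sub>R eps s \<omega>)"
  define E where "E = (\<lambda>s r. (\<integral>\<omega>. inner (eps s \<omega>) (eps r \<omega>) \<partial>M))"
  have c01: "0 \<le> c s" "c s \<le> 1" for s
    using beta unfolding c_def by (auto simp: power_le_one)
  have Xi: "integrable M X"
    unfolding X_def by (rule Bochner_Integration.integrable_sum) (auto intro!: integrable_scaleR_right eps_int)
  then show "integrable M (\<lambda>\<omega>. norm (\<Sum>s=1..t. \<beta> ^ (t - s) *\<^sub>R eps s \<omega>))"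
    unfolding X_def c_def by auto
  have sq: "(norm (X \<omega>))\<^sup>2 = (\<Sum>s=1..t. \<Sum>r=1..t. c s * (c r * inner (eps r \<omega>) (eps s \<omega>)))" for \<omega>
    unfolding power2_norm_eq_inner X_def by (simp add: inner_sum_left inner_sum_right sum_distrib_left)
  have sqi: "integrable M (\<lambda>\<omega>. (norm (X \<omega>))\<^sup>2)"
    unfolding sq by (rule Bochner_Integration.integrable_sum, rule Bochner_Integration.integrable_sum) (auto intro!: integrable_mult_right cross_int)
  have "(\<integral>\<omega>. (norm (X \<omega>))\<^sup>2 \<partial>M) = (\<integral>\<omega>. (\<Sum>s=1..t. \<Sum>r=1..t. c s * (c r * inner (eps r \<omega>) (eps s \<omega>))) \<partial>M)"
    by (simp only: sq)
  also have "\<dots> = (\<Sum>s=1..t. (\<integral>\<omega>. (\<Sum>r=1..t. c s * (c r * inner (eps r \<omega>) (eps s \<omega>))) \<partial>M))"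
    by (rule Bochner_Integration.integral_sum, rule Bochner_Integration.integrable_sum)
       (auto intro!: integrable_mult_right cross_int)
  also have "\<dots> = (\<Sum>s=1..t. \<Sum>r=1..t. c s * (c r * E r s))"
  proof (rule sum.cong[OF refl])
    fix s assume s: "s \<in> {1..t}"
    have "(\<integral>\<omega>. (\<Sum>r=1..t. c s * (c r * inner (eps r \<omega>) (eps s \<omega>))) \<partial>M)
       = (\<Sum>r=1..t. (\<integral>\<omega>. c s * (c r * inner (eps r \<omega>) (eps s \<omega>)) \<partial>M))"
      by (rule Bochner_Integration.integral_sum) (use s in \<open>auto intro!: integrable_mult_right cross_int\<close>)
    also have "\<dots> = (\<Sum>r=1..t. c s * (c r * E r s))"
      unfolding E_def by simp
    finally show "(\<integral>\<omega>. (\<Sum>r=1..t. c s * (c r * inner (eps r \<omega>) (eps s \<omega>))) \<partial>M) = (\<Sum>r=1..t. c s * (c r * E r s))" .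
  qed
  also have "\<dots> = (\<Sum>s=1..t. c s * (c s * E s s))"
  proof (rule sum.cong[OF refl])
    fix s assume s: "s \<in> {1..t}"
    have "(\<Sum>r=1..t. c s * (c r * E r s)) = c s * (c s * E s s) + (\<Sum>r\<in>{1..t} - {s}. c s * (c r * E r s))"
      using s by (subst sum.remove) auto
    also have "(\<Sum>r\<in>{1..t} - {s}. c s * (c r * E r s)) = 0"
      using s by (intro sum.neutral) (auto simp: E_def cross)
    finally show "(\<Sum>r=1..t. c s * (c r * E r s)) = c s * (c s * E s s)" by simp
  qed
  also have "\<dots> \<le> (\<Sum>s=1..t. c s * \<sigma>\<^sup>2)"
  proof (rule sum_mono)
    fix s assume s: "s \<in> {1..t}"
    have Ess: "E s s = (\<integral>\<omega>. (norm (eps s \<omega>))\<^sup>2 \<partial>M)"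
      unfolding E_def by (simp add: power2_norm_eq_inner)
    have "0 \<le> E s s" unfolding Ess by simp
    moreover have "E s s \<le> \<sigma>\<^sup>2" unfolding Ess using eps_sq_bound s by auto
    ultimately have "c s * E s s \<le> 1 * \<sigma>\<^sup>2" using c01[of s] by (intro mult_mono) auto
    then show "c s * (c s * E s s) \<le> c s * \<sigma>\<^sup>2" using c01[of s] by (intro mult_left_mono) auto
  qed
  also have "\<dots> = \<sigma>\<^sup>2 * (\<Sum>s=1..t. \<beta> ^ (t - s))"
    unfolding c_def by (simp add: sum_distrib_left mult.commute)
  also have "\<dots> \<le> \<sigma>\<^sup>2 * (1 / (1 - \<beta>))"
    by (intro mult_left_mono geo_le) auto
  finally have Esq: "(\<integral>\<omega>. (norm (X \<omega>))\<^sup>2 \<partial>M) \<le> \<sigma>\<^sup>2 / (1 - \<beta>)" by simp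
  have ni: "integrable M (\<lambda>\<omega>. norm (X \<omega>))" using Xi by auto
  have "0 \<le> MM.variance (\<lambda>\<omega>. norm (X \<omega>))" by (rule MM.variance_positive)
  also have "MM.variance (\<lambda>\<omega>. norm (X \<omega>)) = (\<integral>\<omega>. (norm (X \<omega>))\<^sup>2 \<partial>M) - (\<integral>\<omega>. norm (X \<omega>) \<partial>M)\<^sup>2"
    by (rule MM.variance_eq[OF ni sqi])
  finally have "(\<integral>\<omega>. norm (X \<omega>) \<partial>M)\<^sup>2 \<le> \<sigma>\<^sup>2 / (1 - \<beta>)" using Esq by linarith
  then have "(\<integral>\<omega>. norm (X \<omega>) \<partial>M) \<le> sqrt (\<sigma>\<^sup>2 / (1 - \<beta>))" by (rule real_le_rsqrt)
  also have "sqrt (\<sigma>\<^sup>2 / (1 - \<beta>)) = \<sigma> / sqrt (1 - \<beta>)"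
    using sigma by (simp add: real_sqrt_divide)
  finally show "(\<integral>\<omega>. norm (\<Sum>s=1..t. \<beta> ^ (t - s) *\<^sub>R eps s \<omega>) \<partial>M) \<le> \<sigma> / sqrt (1 - \<beta>)"
    unfolding X_def c_def .
qed

end

context cv begin

definition Sv where "Sv t \<omega> = (\<Sum>s=1..t. \<beta> ^ (t - s) *\<^sub>R gradF (cs_y x \<Delta> s \<omega>))"
definition Ev where "Ev t \<omega> = (\<Sum>s=1..t. \<beta> ^ (t - s) *\<^sub>R eps s \<omega>)"
definition av where "av s \<omega> = cs_loss \<mu> (cs_g orc x \<Delta> s \<omega>) (\<Delta> s \<omega>)"
definition Wt where "Wt t = (\<Sum>s=1..t. \<beta> ^ (t - s))"

lemma g_split: "cs_g orc x \<Delta> s \<omega> = gradF (cs_y x \<Delta> s \<omega>) + eps s \<omega>"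
  by (simp add: eps_def)

lemma reg_expand: "cs_regret \<beta> \<mu> orc x \<Delta> t u \<omega> =
   (\<Sum>s=1..t. \<beta> ^ (t - s) * av s \<omega>) - inner (Sv t \<omega> + Ev t \<omega>) u - \<mu> / 2 * (norm u)\<^sup>2 * Wt t"
proof -
  have "cs_regret \<beta> \<mu> orc x \<Delta> t u \<omega> = (\<Sum>s=1..t. \<beta> ^ (t - s) * av s \<omega>
      - \<beta> ^ (t - s) * inner (cs_g orc x \<Delta> s \<omega>) u - \<beta> ^ (t - s) * (\<mu> / 2 * (norm u)\<^sup>2))"
    unfolding cs_regret_def av_def cs_loss_def by (intro sum.cong refl) (simp add: algebra_simps)
  also have "\<dots> = (\<Sum>s=1..t. \<beta> ^ (t - s) * av s \<omega>) - (\<Sum>s=1..t. \<beta> ^ (t - s) * inner (cs_g orc x \<Delta> s \<omega>) u)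
      - (\<Sum>s=1..t. \<beta> ^ (t - s) * (\<mu> / 2 * (norm u)\<^sup>2))"
    by (simp add: sum_subtractf)
  also have "(\<Sum>s=1..t. \<beta> ^ (t - s) * inner (cs_g orc x \<Delta> s \<omega>) u) = inner (Sv t \<omega> + Ev t \<omega>) u"
    unfolding Sv_def Ev_def g_split
    by (simp add: inner_sum_left inner_add_left sum.distrib distrib_left)
  also have "(\<Sum>s=1..t. \<beta> ^ (t - s) * (\<mu> / 2 * (norm u)\<^sup>2)) = (\<Sum>s=1..t. \<beta> ^ (t - s)) * (\<mu> / 2 * (norm u)\<^sup>2)"
    by (rule sum_distrib_right[symmetric])
  finally show ?thesis unfolding Wt_def by (simp add: mult.commute)
qed

lemma u_eq: "cs_u D \<beta> gradF x \<Delta> t \<omega> = - ((D / norm (Sv t \<omega>)) *\<^sub>R Sv t \<omega>)"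
  by (simp add: cs_u_def Sv_def Let_def)

lemma u_norm: "norm (cs_u D \<beta> gradF x \<Delta> t \<omega>) \<le> D"
proof (cases "Sv t \<omega> = 0")
  case True
  then show ?thesis using Dpos by (simp add: u_eq)
next
  case False
  then have "norm (Sv t \<omega>) > 0" by simp
  then show ?thesis using Dpos by (simp add: u_eq)
qed

lemma u_inner: "inner (Sv t \<omega>) (cs_u D \<beta> gradF x \<Delta> t \<omega>) = - D * norm (Sv t \<omega>)"
proof (cases "Sv t \<omega> = 0")
  case True
  then show ?thesis by (simp add: u_eq)
next
  case False
  then have n: "norm (Sv t \<omega>) > 0" by simp
  have "inner (Sv t \<omega>) (cs_u D \<beta> gradF x \<Delta> t \<omega>) = - (D / norm (Sv t \<omega>)) * (norm (Sv t \<omega>))\<^sup>2"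
    by (simp add: u_eq power2_norm_eq_inner)
  also have "\<dots> = - D * norm (Sv t \<omega>)" using n by (simp add: power2_eq_square)
  finally show ?thesis .
qed

lemma Wt_nonneg: "0 \<le> Wt t"
  unfolding Wt_def using beta by (intro sum_nonneg) auto

lemma reg_lower: "(\<Sum>s=1..t. \<beta> ^ (t - s) * av s \<omega>) + D * norm (Sv t \<omega>) - D * norm (Ev t \<omega>) - \<mu> / 2 * D\<^sup>2 * Wt t
   \<le> cs_regret \<beta> \<mu> orc x \<Delta> t (cs_u D \<beta> gradF x \<Delta> t \<omega>) \<omega>"
proof -
  let ?u = "cs_u D \<beta> gradF x \<Delta> t \<omega>"
  have 1: "inner (Sv t \<omega> + Ev t \<omega>) ?u = - D * norm (Sv t \<omega>) + inner (Ev t \<omega>) ?u"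
    by (simp add: inner_add_left u_inner)
  have "inner (Ev t \<omega>) ?u \<le> norm (Ev t \<omega>) * norm ?u" by (rule norm_cauchy_schwarz)
  also have "\<dots> \<le> norm (Ev t \<omega>) * D" using u_norm by (intro mult_left_mono) auto
  finally have 2: "inner (Ev t \<omega>) ?u \<le> D * norm (Ev t \<omega>)" by (simp add: mult.commute)
  have "(norm ?u)\<^sup>2 \<le> D\<^sup>2" using u_norm by (intro power_mono) auto
  then have 3: "\<mu> / 2 * (norm ?u)\<^sup>2 * Wt t \<le> \<mu> / 2 * D\<^sup>2 * Wt t"
    using mu Wt_nonneg by (intro mult_right_mono mult_left_mono) auto
  show ?thesis unfolding reg_expand[of t ?u \<omega>] using 1 2 3 by linarith
qed

lemma Rsuc: "(\<Sum>s=1..Suc t. \<beta> ^ (Suc t - s) * a s) = \<beta> * (\<Sum>s=1..t. \<beta> ^ (t - s) * a s) + a (Suc t)"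
proof -
  have "(\<Sum>s=1..Suc t. \<beta> ^ (Suc t - s) * a s) = (\<Sum>s=1..t. \<beta> ^ (Suc t - s) * a s) + a (Suc t)"
    by (simp add: sum.cl_ivl_Suc)
  also have "(\<Sum>s=1..t. \<beta> ^ (Suc t - s) * a s) = \<beta> * (\<Sum>s=1..t. \<beta> ^ (t - s) * a s)"
    by (simp add: sum_distrib_left Suc_diff_le mult.assoc)
  finally show ?thesis .
qed

lemma comb: "\<beta> * (\<Sum>s=1..n. \<beta> ^ (n - s) * a s) + (1 - \<beta>) * (\<Sum>t=1..n. \<Sum>s=1..t. \<beta> ^ (t - s) * a s)
   = (\<Sum>t=1..n. a t)"
proof (induction n)
  case 0
  then show ?case by simp
next
  case (Suc n)
  define R where "R = (\<lambda>t. \<Sum>s=1..t. \<beta> ^ (t - s) * a s)"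
  have IH: "\<beta> * R n + (1 - \<beta>) * (\<Sum>t=1..n. R t) = (\<Sum>t=1..n. a t)"
    using Suc.IH unfolding R_def .
  have r: "R (Suc n) = \<beta> * R n + a (Suc n)" unfolding R_def by (rule Rsuc)
  have s1: "(\<Sum>t=1..Suc n. R t) = (\<Sum>t=1..n. R t) + R (Suc n)" by (simp add: sum.cl_ivl_Suc)
  have s2: "(\<Sum>t=1..Suc n. a t) = (\<Sum>t=1..n. a t) + a (Suc n)" by (simp add: sum.cl_ivl_Suc)
  have "\<beta> * R (Suc n) + (1 - \<beta>) * (\<Sum>t=1..Suc n. R t) = (\<Sum>t=1..Suc n. a t)"
    unfolding s1 s2 IH[symmetric] r by (simp add: algebra_simps)
  then show ?case unfolding R_def .
qed

lemma q_sum: "(\<Sum>s=1..t. cs_q \<beta> t s *\<^sub>R gradF (cs_y x \<Delta> s \<omega>)) = ((1 - \<beta>) / (1 - \<beta> ^ t)) *\<^sub>R Sv t \<omega>"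
  unfolding cs_q_def Sv_def scaleR_sum_right scaleR_scaleR
  by (intro sum.cong refl) (simp add: field_simps)

lemma alg1: "(a::real) \<noteq> 0 \<Longrightarrow> b \<noteq> 0 \<Longrightarrow> c \<noteq> 0 \<Longrightarrow> a / (b * c) * (b / a * n) = 1 / c * n"
  by (simp add: field_simps)

lemma tau_term:
  assumes t: "1 \<le> t" "t \<le> T"
  shows "tau_prob \<beta> T t * norm (\<Sum>s=1..t. cs_q \<beta> t s *\<^sub>R gradF (cs_y x \<Delta> s \<omega>))
    = (if t < T then (1 - \<beta>) / T else 1 / T) * norm (Sv t \<omega>)"
proof -
  have bt: "\<beta> ^ t < 1" using beta t by (subst power_less_one_iff) auto
  have c: "0 < (1 - \<beta>) / (1 - \<beta> ^ t)" using bt beta by simp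
  have n: "norm (\<Sum>s=1..t. cs_q \<beta> t s *\<^sub>R gradF (cs_y x \<Delta> s \<omega>)) = (1 - \<beta>) / (1 - \<beta> ^ t) * norm (Sv t \<omega>)"
    by (simp only: q_sum norm_scaleR abs_of_pos[OF c])
  have Tp: "(0::real) < T" using T by simp
  show ?thesis
  proof (cases "t < T")
    case True
    then show ?thesis unfolding n tau_prob_def using bt Tp by (simp add: field_simps)
  next
    case False
    then have "t = T" using t by simp
    have a: "1 - \<beta> ^ T \<noteq> 0" "1 - \<beta> \<noteq> 0" "real T \<noteq> 0" using bt beta Tp \<open>t = T\<close> by auto
    have "tau_prob \<beta> T t * ((1 - \<beta>) / (1 - \<beta> ^ t) * norm (Sv t \<omega>))
        = (1 - \<beta> ^ T) / ((1 - \<beta>) * T) * ((1 - \<beta>) / (1 - \<beta> ^ T) * norm (Sv T \<omega>))"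
      unfolding tau_prob_def using \<open>t = T\<close> by simp
    also have "\<dots> = 1 / T * norm (Sv T \<omega>)" by (rule alg1[OF a])
    finally show ?thesis unfolding n using \<open>t = T\<close> by simp
  qed
qed

lemma lhs_sum: "(\<Sum>t=1..T. (if t < T then (1 - \<beta>) / T else 1 / T) * norm (Sv t \<omega>))
   = (\<beta> * norm (Sv T \<omega>) + (1 - \<beta>) * (\<Sum>t=1..T. norm (Sv t \<omega>))) / T"
proof -
  obtain n where n: "T = Suc n" using T by (cases T) auto
  have Tp: "(0::real) < T" using T by simp
  have "(\<Sum>t=1..T. (if t < T then (1 - \<beta>) / T else 1 / T) * norm (Sv t \<omega>))
     = (\<Sum>t=1..n. (1 - \<beta>) / T * norm (Sv t \<omega>)) + 1 / T * norm (Sv T \<omega>)"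
    unfolding n by (simp add: sum.cl_ivl_Suc)
  also have "\<dots> = ((1 - \<beta>) * (\<Sum>t=1..n. norm (Sv t \<omega>)) + norm (Sv T \<omega>)) / T"
    by (simp add: add_divide_distrib sum_distrib_left sum_divide_distrib)
  also have "(\<Sum>t=1..T. norm (Sv t \<omega>)) = (\<Sum>t=1..n. norm (Sv t \<omega>)) + norm (Sv T \<omega>)"
    unfolding n by (simp add: sum.cl_ivl_Suc)
  then have "((1 - \<beta>) * (\<Sum>t=1..n. norm (Sv t \<omega>)) + norm (Sv T \<omega>)) / T
      = (\<beta> * norm (Sv T \<omega>) + (1 - \<beta>) * (\<Sum>t=1..T. norm (Sv t \<omega>))) / T"
    by (simp add: algebra_simps)
  finally show ?thesis .
qed

end

context cv begin

definition Rg where "Rg t \<omega> = cs_regret \<beta> \<mu> orc x \<Delta> t (cs_u D \<beta> gradF x \<Delta> t \<omega>) \<omega>"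

lemma gy_meas: "1 \<le> s \<Longrightarrow> (\<lambda>\<omega>. gradF (cs_y x \<Delta> s \<omega>)) \<in> borel_measurable M"
  using measurable_compose[OF y_meas gradF_meas] by simp

lemma gy_int: "1 \<le> s \<Longrightarrow> integrable M (\<lambda>\<omega>. gradF (cs_y x \<Delta> s \<omega>))"
proof -
  assume s: "1 \<le> s"
  interpret MM: prob_space M by (rule M_prob)
  show ?thesis by (rule MM.integrable_const_bound[where B=G]) (auto simp: gradbd gy_meas[OF s])
qed

lemma Sv_int: "integrable M (Sv t)"
proof -
  have "integrable M (\<lambda>\<omega>. \<Sum>s=1..t. \<beta> ^ (t - s) *\<^sub>R gradF (cs_y x \<Delta> s \<omega>))"
    by (rule Bochner_Integration.integrable_sum) (auto intro!: integrable_scaleR_right gy_int)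
  then show ?thesis unfolding Sv_def[abs_def] .
qed

lemma Ev_int: "integrable M (Ev t)"
proof -
  have "integrable M (\<lambda>\<omega>. \<Sum>s=1..t. \<beta> ^ (t - s) *\<^sub>R eps s \<omega>)"
    by (rule Bochner_Integration.integrable_sum) (auto intro!: integrable_scaleR_right eps_int)
  then show ?thesis unfolding Ev_def[abs_def] .
qed

lemma Sv_meas[measurable]: "Sv t \<in> borel_measurable M"
  using Sv_int by auto

lemma Ev_meas[measurable]: "Ev t \<in> borel_measurable M"
  using Ev_int by auto

lemma u_meas[measurable]: "(\<lambda>\<omega>. cs_u D \<beta> gradF x \<Delta> t \<omega>) \<in> borel_measurable M"
  unfolding u_eq by measurable

lemma av_props:
  assumes t: "1 \<le> t" "t \<le> T"
  shows "integrable M (av t)"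
    and "(\<integral>\<omega>. av t \<omega> \<partial>M) = (\<integral>\<omega>. F (cs_w x \<Delta> t \<omega>) - F (x t \<omega>) \<partial>M) + \<mu> / 2 * (\<integral>\<omega>. (norm (\<Delta> t \<omega>))\<^sup>2 \<partial>M)"
proof -
  have dm: "\<Delta> t \<in> borel_measurable M" using \<Delta>_meas t by auto
  have z: "integrable M (\<lambda>\<omega>. inner (eps t \<omega>) (\<Delta> t \<omega>))" "(\<integral>\<omega>. inner (eps t \<omega>) (\<Delta> t \<omega>) \<partial>M) = 0"
    using zero[OF t(1) dm \<Delta>_sq_int[OF t]] \<Delta>_upd[OF t(1)] by auto
  have e: "av t = (\<lambda>\<omega>. inner (gradF (cs_y x \<Delta> t \<omega>)) (\<Delta> t \<omega>) + inner (eps t \<omega>) (\<Delta> t \<omega>) + \<mu> / 2 * (norm (\<Delta> t \<omega>))\<^sup>2)"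
    by (rule ext) (simp add: av_def cs_loss_def g_split inner_add_left)
  show "integrable M (av t)" unfolding e using p1(1)[OF t] z(1) \<Delta>_sq_int[OF t] by auto
  show "(\<integral>\<omega>. av t \<omega> \<partial>M) = (\<integral>\<omega>. F (cs_w x \<Delta> t \<omega>) - F (x t \<omega>) \<partial>M) + \<mu> / 2 * (\<integral>\<omega>. (norm (\<Delta> t \<omega>))\<^sup>2 \<partial>M)"
    unfolding e using p1(1)[OF t] p1(3)[OF t] z \<Delta>_sq_int[OF t] by simp
qed

lemma Rg_int:
  assumes t: "1 \<le> t" "t \<le> T"
  shows "integrable M (Rg t)"
proof -
  interpret MM: prob_space M by (rule M_prob)
  have e: "Rg t = (\<lambda>\<omega>. (\<Sum>s=1..t. \<beta> ^ (t - s) * av s \<omega>) - inner (Sv t \<omega> + Ev t \<omega>) (cs_u D \<beta> gradF x \<Delta> t \<omega>)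
      - \<mu> / 2 * (norm (cs_u D \<beta> gradF x \<Delta> t \<omega>))\<^sup>2 * Wt t)"
    by (rule ext) (simp add: Rg_def reg_expand)
  have i1: "integrable M (\<lambda>\<omega>. \<Sum>s=1..t. \<beta> ^ (t - s) * av s \<omega>)"
    by (rule Bochner_Integration.integrable_sum) (use t in \<open>auto intro!: integrable_mult_right av_props(1)\<close>)
  have bi: "integrable M (\<lambda>\<omega>. D * (norm (Sv t \<omega>) + norm (Ev t \<omega>)))"
    using Sv_int Ev_int by auto
  have i2: "integrable M (\<lambda>\<omega>. inner (Sv t \<omega> + Ev t \<omega>) (cs_u D \<beta> gradF x \<Delta> t \<omega>))"
    using bi
  proof (rule Bochner_Integration.integrable_bound)
    show "(\<lambda>\<omega>. inner (Sv t \<omega> + Ev t \<omega>) (cs_u D \<beta> gradF x \<Delta> t \<omega>)) \<in> borel_measurable M"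
      by measurable
    show "AE \<omega> in M. norm (inner (Sv t \<omega> + Ev t \<omega>) (cs_u D \<beta> gradF x \<Delta> t \<omega>)) \<le> norm (D * (norm (Sv t \<omega>) + norm (Ev t \<omega>)))"
    proof (rule AE_I2)
      fix \<omega>
      have "norm (inner (Sv t \<omega> + Ev t \<omega>) (cs_u D \<beta> gradF x \<Delta> t \<omega>)) \<le> norm (Sv t \<omega> + Ev t \<omega>) * norm (cs_u D \<beta> gradF x \<Delta> t \<omega>)"
        using Cauchy_Schwarz_ineq2 by simp
      also have "\<dots> \<le> (norm (Sv t \<omega>) + norm (Ev t \<omega>)) * D"
        using u_norm norm_triangle_ineq by (intro mult_mono) auto
      finally show "norm (inner (Sv t \<omega> + Ev t \<omega>) (cs_u D \<beta> gradF x \<Delta> t \<omega>)) \<le> norm (D * (norm (Sv t \<omega>) + norm (Ev t \<omega>)))"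
        using Dpos by (simp add: mult.commute)
    qed
  qed
  have i3: "integrable M (\<lambda>\<omega>. \<mu> / 2 * (norm (cs_u D \<beta> gradF x \<Delta> t \<omega>))\<^sup>2 * Wt t)"
  proof (rule MM.integrable_const_bound[where B="\<mu> / 2 * D\<^sup>2 * Wt t"])
    show "AE \<omega> in M. norm (\<mu> / 2 * (norm (cs_u D \<beta> gradF x \<Delta> t \<omega>))\<^sup>2 * Wt t) \<le> \<mu> / 2 * D\<^sup>2 * Wt t"
    proof (rule AE_I2)
      fix \<omega>
      have "(norm (cs_u D \<beta> gradF x \<Delta> t \<omega>))\<^sup>2 \<le> D\<^sup>2" using u_norm by (intro power_mono) auto
      then have "\<mu> / 2 * (norm (cs_u D \<beta> gradF x \<Delta> t \<omega>))\<^sup>2 * Wt t \<le> \<mu> / 2 * D\<^sup>2 * Wt t"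
        using mu Wt_nonneg by (intro mult_right_mono mult_left_mono) auto
      then show "norm (\<mu> / 2 * (norm (cs_u D \<beta> gradF x \<Delta> t \<omega>))\<^sup>2 * Wt t) \<le> \<mu> / 2 * D\<^sup>2 * Wt t"
        using mu Wt_nonneg by simp
    qed
  qed measurable
  show ?thesis unfolding e by (rule Bochner_Integration.integrable_diff[OF Bochner_Integration.integrable_diff[OF i1 i2] i3])
qed

end

context cv begin

lemma pw_main:
  "D * T * (\<Sum>t=1..T. tau_prob \<beta> T t * norm (\<Sum>s=1..t. cs_q \<beta> t s *\<^sub>R gradF (cs_y x \<Delta> s \<omega>)))
   \<le> (\<beta> * Rg T \<omega> + (1 - \<beta>) * (\<Sum>t=1..T. Rg t \<omega>)) - (\<Sum>t=1..T. av t \<omega>)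
     + D * (\<beta> * norm (Ev T \<omega>) + (1 - \<beta>) * (\<Sum>t=1..T. norm (Ev t \<omega>))) + \<mu> / 2 * D\<^sup>2 * T"
proof -
  have Tp: "(0::real) < T" using T by simp
  have "(\<Sum>t=1..T. tau_prob \<beta> T t * norm (\<Sum>s=1..t. cs_q \<beta> t s *\<^sub>R gradF (cs_y x \<Delta> s \<omega>)))
      = (\<Sum>t=1..T. (if t < T then (1 - \<beta>) / T else 1 / T) * norm (Sv t \<omega>))"
    by (rule sum.cong[OF refl]) (rule tau_term, auto)
  also have "\<dots> = (\<beta> * norm (Sv T \<omega>) + (1 - \<beta>) * (\<Sum>t=1..T. norm (Sv t \<omega>))) / T"
    by (rule lhs_sum)
  finally have lhs: "D * T * (\<Sum>t=1..T. tau_prob \<beta> T t * norm (\<Sum>s=1..t. cs_q \<beta> t s *\<^sub>R gradF (cs_y x \<Delta> s \<omega>)))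
      = D * (\<beta> * norm (Sv T \<omega>) + (1 - \<beta>) * (\<Sum>t=1..T. norm (Sv t \<omega>)))"
    using Tp by simp
  define A where "A = (\<lambda>t. \<Sum>s=1..t. \<beta> ^ (t - s) * av s \<omega>)"
  define c where "c = \<mu> / 2 * D\<^sup>2"
  define L where "L = (\<lambda>t. A t + D * norm (Sv t \<omega>) - D * norm (Ev t \<omega>) - c * Wt t)"
  have low: "\<beta> * L T + (1 - \<beta>) * (\<Sum>t=1..T. L t) \<le> \<beta> * Rg T \<omega> + (1 - \<beta>) * (\<Sum>t=1..T. Rg t \<omega>)"
  proof (rule add_mono)
    show "\<beta> * L T \<le> \<beta> * Rg T \<omega>"
      using beta reg_lower unfolding L_def A_def Rg_def c_def by (intro mult_left_mono) auto
    show "(1 - \<beta>) * (\<Sum>t=1..T. L t) \<le> (1 - \<beta>) * (\<Sum>t=1..T. Rg t \<omega>)"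
      using beta reg_lower unfolding L_def A_def Rg_def c_def by (intro mult_left_mono sum_mono) auto
  qed
  have eq: "\<beta> * L T + (1 - \<beta>) * (\<Sum>t=1..T. L t) =
      (\<beta> * A T + (1 - \<beta>) * (\<Sum>t=1..T. A t))
      + D * (\<beta> * norm (Sv T \<omega>) + (1 - \<beta>) * (\<Sum>t=1..T. norm (Sv t \<omega>)))
      - D * (\<beta> * norm (Ev T \<omega>) + (1 - \<beta>) * (\<Sum>t=1..T. norm (Ev t \<omega>)))
      - c * (\<beta> * Wt T + (1 - \<beta>) * (\<Sum>t=1..T. Wt t))"
    unfolding L_def by (simp add: sum.distrib sum_subtractf sum_distrib_left algebra_simps)
  have cA: "\<beta> * A T + (1 - \<beta>) * (\<Sum>t=1..T. A t) = (\<Sum>t=1..T. av t \<omega>)"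
    unfolding A_def by (rule comb)
  have cW: "\<beta> * Wt T + (1 - \<beta>) * (\<Sum>t=1..T. Wt t) = T"
    using comb[of T "\<lambda>_. 1"] unfolding Wt_def by simp
  have eq2: "\<beta> * L T + (1 - \<beta>) * (\<Sum>t=1..T. L t) =
      (\<Sum>t=1..T. av t \<omega>)
      + D * (\<beta> * norm (Sv T \<omega>) + (1 - \<beta>) * (\<Sum>t=1..T. norm (Sv t \<omega>)))
      - D * (\<beta> * norm (Ev T \<omega>) + (1 - \<beta>) * (\<Sum>t=1..T. norm (Ev t \<omega>)))
      - c * T"
    unfolding eq cA cW ..
  show ?thesis using lhs low eq2 unfolding c_def by linarith
qed

end

lemma fin_alg:
  fixes P X Fs Dq \<sigma> \<beta> D \<mu> Tr :: real
  assumes D: "0 < D" and Tr: "0 < Tr" and b: "\<beta> < 1"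
    and h: "D * Tr * P \<le> X + Fs - \<mu> / 2 * Dq + D * (\<beta> * (\<sigma> / sqrt (1 - \<beta>)) + (1 - \<beta>) * (Tr * (\<sigma> / sqrt (1 - \<beta>)))) + \<mu> / 2 * D\<^sup>2 * Tr"
  shows "P \<le> X / (D * Tr) - \<mu> * Dq / (2 * D * Tr) + Fs / (D * Tr) + \<sigma> * \<beta> / (Tr * sqrt (1 - \<beta>)) + \<sigma> * sqrt (1 - \<beta>) + \<mu> * D / 2"
proof -
  define r where "r = sqrt (1 - \<beta>)"
  have r: "0 < r" "r\<^sup>2 = 1 - \<beta>" unfolding r_def using b by auto
  have e: "(1 - \<beta>) * (Tr * (\<sigma> / r)) = Tr * \<sigma> * r"
    unfolding r(2)[symmetric] using r(1) by (simp add: power2_eq_square field_simps)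
  define RHS where "RHS = X / (D * Tr) - \<mu> * Dq / (2 * D * Tr) + Fs / (D * Tr) + \<sigma> * \<beta> / (Tr * r) + \<sigma> * r + \<mu> * D / 2"
  have "D * Tr * RHS = X + Fs - \<mu> / 2 * Dq + D * (\<beta> * (\<sigma> / r)) + D * (Tr * \<sigma> * r) + \<mu> / 2 * D\<^sup>2 * Tr"
    unfolding RHS_def using D Tr r(1) by (simp add: field_simps power2_eq_square)
  also have "\<dots> = X + Fs - \<mu> / 2 * Dq + D * (\<beta> * (\<sigma> / r) + (1 - \<beta>) * (Tr * (\<sigma> / r))) + \<mu> / 2 * D\<^sup>2 * Tr"
    unfolding e by (simp add: algebra_simps)
  finally have "D * Tr * P \<le> D * Tr * RHS" using h unfolding r_def by simp
  then have "P \<le> RHS" using D Tr by (simp add: mult_le_cancel_left_pos)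
  then show ?thesis unfolding RHS_def r_def .
qed

context cv begin

lemma main:
  "(\<Sum>t=1..T. tau_prob \<beta> T t *
            (\<integral>\<omega>. norm (\<Sum>s=1..t. cs_q \<beta> t s *\<^sub>R gradF (cs_y x \<Delta> s \<omega>)) \<partial>M))
     \<le> (\<beta> * (\<integral>\<omega>. Rg T \<omega> \<partial>M)
          + (1 - \<beta>) * (\<Sum>t=1..T. \<integral>\<omega>. Rg t \<omega> \<partial>M))
          / (D * T)
       - \<mu> * (\<integral>\<omega>. (\<Sum>t=1..T. (norm (\<Delta> t \<omega>))\<^sup>2) \<partial>M) / (2 * D * T)
       + (\<integral>\<omega>. (\<Sum>t=1..T. F (x t \<omega>) - F (cs_w x \<Delta> t \<omega>)) \<partial>M) / (D * T)
       + \<sigma> * \<beta> / (T * sqrt (1 - \<beta>))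
       + \<sigma> * sqrt (1 - \<beta>)
       + \<mu> * D / 2"
proof -
  interpret MM: prob_space M by (rule M_prob)
  define Q where "Q t \<omega> = norm (\<Sum>s=1..t. cs_q \<beta> t s *\<^sub>R gradF (cs_y x \<Delta> s \<omega>))" for t \<omega>
  have Qi: "integrable M (Q t)" for t
  proof -
    have "integrable M (\<lambda>\<omega>. \<Sum>s=1..t. cs_q \<beta> t s *\<^sub>R gradF (cs_y x \<Delta> s \<omega>))"
      by (rule Bochner_Integration.integrable_sum) (auto intro!: integrable_scaleR_right gy_int)
    then show ?thesis unfolding Q_def[abs_def] by (rule integrable_norm)
  qed
  define Lw where "Lw \<omega> = (\<Sum>t=1..T. tau_prob \<beta> T t * Q t \<omega>)" for \<omega>
  have Lwi: "integrable M Lw"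
    unfolding Lw_def[abs_def] by (rule Bochner_Integration.integrable_sum) (auto intro!: integrable_mult_right Qi)
  have P: "(\<Sum>t=1..T. tau_prob \<beta> T t * (\<integral>\<omega>. Q t \<omega> \<partial>M)) = (\<integral>\<omega>. Lw \<omega> \<partial>M)"
    unfolding Lw_def by (subst Bochner_Integration.integral_sum) (auto intro!: integrable_mult_right Qi)
  have iRT: "integrable M (Rg T)" using Rg_int[of T] T by simp
  have iRs: "integrable M (\<lambda>\<omega>. \<Sum>t=1..T. Rg t \<omega>)"
    by (rule Bochner_Integration.integrable_sum) (auto intro!: Rg_int)
  have sR: "(\<integral>\<omega>. (\<Sum>t=1..T. Rg t \<omega>) \<partial>M) = (\<Sum>t=1..T. (\<integral>\<omega>. Rg t \<omega> \<partial>M))"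
    by (rule Bochner_Integration.integral_sum) (auto intro!: Rg_int)
  have iav: "integrable M (\<lambda>\<omega>. \<Sum>t=1..T. av t \<omega>)"
    by (rule Bochner_Integration.integrable_sum) (auto intro!: av_props(1))
  have sA: "(\<integral>\<omega>. (\<Sum>t=1..T. av t \<omega>) \<partial>M) = (\<Sum>t=1..T. (\<integral>\<omega>. av t \<omega> \<partial>M))"
    by (rule Bochner_Integration.integral_sum) (auto intro!: av_props(1))
  have iET: "integrable M (\<lambda>\<omega>. norm (Ev T \<omega>))" using Ev_int by auto
  have iEs: "integrable M (\<lambda>\<omega>. \<Sum>t=1..T. norm (Ev t \<omega>))"
    by (rule Bochner_Integration.integrable_sum) (use Ev_int in auto)
  have sE: "(\<integral>\<omega>. (\<Sum>t=1..T. norm (Ev t \<omega>)) \<partial>M) = (\<Sum>t=1..T. (\<integral>\<omega>. norm (Ev t \<omega>) \<partial>M))"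
    by (rule Bochner_Integration.integral_sum) (use Ev_int in auto)
  define Rw where "Rw \<omega> = (\<beta> * Rg T \<omega> + (1 - \<beta>) * (\<Sum>t=1..T. Rg t \<omega>)) - (\<Sum>t=1..T. av t \<omega>)
     + D * (\<beta> * norm (Ev T \<omega>) + (1 - \<beta>) * (\<Sum>t=1..T. norm (Ev t \<omega>))) + \<mu> / 2 * D\<^sup>2 * T" for \<omega>
  have Rwi: "integrable M Rw"
    unfolding Rw_def[abs_def] using iRT iRs iav iET iEs by simp
  have IRw: "(\<integral>\<omega>. Rw \<omega> \<partial>M) = (\<beta> * (\<integral>\<omega>. Rg T \<omega> \<partial>M) + (1 - \<beta>) * (\<Sum>t=1..T. \<integral>\<omega>. Rg t \<omega> \<partial>M))
     - (\<Sum>t=1..T. \<integral>\<omega>. av t \<omega> \<partial>M)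
     + D * (\<beta> * (\<integral>\<omega>. norm (Ev T \<omega>) \<partial>M) + (1 - \<beta>) * (\<Sum>t=1..T. \<integral>\<omega>. norm (Ev t \<omega>) \<partial>M)) + \<mu> / 2 * D\<^sup>2 * T"
    unfolding Rw_def using iRT iRs iav iET iEs sR sA sE by (simp add: MM.prob_space)
  have mono: "(\<integral>\<omega>. D * T * Lw \<omega> \<partial>M) \<le> (\<integral>\<omega>. Rw \<omega> \<partial>M)"
  proof (rule integral_mono)
    show "integrable M (\<lambda>\<omega>. D * T * Lw \<omega>)" using Lwi by simp
    show "integrable M Rw" by (rule Rwi)
    fix \<omega>
    show "D * T * Lw \<omega> \<le> Rw \<omega>" unfolding Lw_def Q_def Rw_def by (rule pw_main)
  qed
  have ILw: "(\<integral>\<omega>. D * T * Lw \<omega> \<partial>M) = D * T * (\<integral>\<omega>. Lw \<omega> \<partial>M)" by simp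
  define Fs where "Fs = (\<integral>\<omega>. (\<Sum>t=1..T. F (x t \<omega>) - F (cs_w x \<Delta> t \<omega>)) \<partial>M)"
  define Dq where "Dq = (\<integral>\<omega>. (\<Sum>t=1..T. (norm (\<Delta> t \<omega>))\<^sup>2) \<partial>M)"
  have iFx: "integrable M (\<lambda>\<omega>. F (x t \<omega>) - F (cs_w x \<Delta> t \<omega>))" if "t \<in> {1..T}" for t
    using integrable_minus[OF p1(2)[of t]] that by simp
  have Fs_eq: "Fs = - (\<Sum>t=1..T. \<integral>\<omega>. F (cs_w x \<Delta> t \<omega>) - F (x t \<omega>) \<partial>M)"
  proof -
    have "Fs = (\<Sum>t=1..T. \<integral>\<omega>. F (x t \<omega>) - F (cs_w x \<Delta> t \<omega>) \<partial>M)"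
      unfolding Fs_def by (rule Bochner_Integration.integral_sum) (rule iFx)
    also have "\<dots> = (\<Sum>t=1..T. - (\<integral>\<omega>. F (cs_w x \<Delta> t \<omega>) - F (x t \<omega>) \<partial>M))"
    proof (rule sum.cong[OF refl])
      fix t
      have "(\<lambda>\<omega>. F (x t \<omega>) - F (cs_w x \<Delta> t \<omega>)) = (\<lambda>\<omega>. - (F (cs_w x \<Delta> t \<omega>) - F (x t \<omega>)))" by auto
      then show "(\<integral>\<omega>. F (x t \<omega>) - F (cs_w x \<Delta> t \<omega>) \<partial>M) = - (\<integral>\<omega>. F (cs_w x \<Delta> t \<omega>) - F (x t \<omega>) \<partial>M)"
        by (simp only: integral_minus)
    qed
    finally show ?thesis by (simp add: sum_negf)
  qed
  have Dq_eq: "Dq = (\<Sum>t=1..T. \<integral>\<omega>. (norm (\<Delta> t \<omega>))\<^sup>2 \<partial>M)"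
    unfolding Dq_def by (rule Bochner_Integration.integral_sum) (auto intro!: \<Delta>_sq_int)
  have avsum: "(\<Sum>t=1..T. \<integral>\<omega>. av t \<omega> \<partial>M) = - Fs + \<mu> / 2 * Dq"
  proof -
    have "(\<Sum>t=1..T. \<integral>\<omega>. av t \<omega> \<partial>M) = (\<Sum>t=1..T. (\<integral>\<omega>. F (cs_w x \<Delta> t \<omega>) - F (x t \<omega>) \<partial>M) + \<mu> / 2 * (\<integral>\<omega>. (norm (\<Delta> t \<omega>))\<^sup>2 \<partial>M))"
      by (rule sum.cong[OF refl]) (rule av_props(2), auto)
    also have "\<dots> = - Fs + \<mu> / 2 * Dq"
      unfolding Fs_eq Dq_eq by (simp add: sum.distrib sum_distrib_left)
    finally show ?thesis .
  qed
  have nT: "(\<integral>\<omega>. norm (Ev T \<omega>) \<partial>M) \<le> \<sigma> / sqrt (1 - \<beta>)"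
    using noise(2)[of T] unfolding Ev_def .
  have ns: "(\<Sum>t=1..T. \<integral>\<omega>. norm (Ev t \<omega>) \<partial>M) \<le> T * (\<sigma> / sqrt (1 - \<beta>))"
  proof -
    have "(\<Sum>t=1..T. \<integral>\<omega>. norm (Ev t \<omega>) \<partial>M) \<le> (\<Sum>t=1..T. \<sigma> / sqrt (1 - \<beta>))"
      by (rule sum_mono) (use noise(2) in \<open>simp add: Ev_def\<close>)
    then show ?thesis by simp
  qed
  have noise_all: "D * (\<beta> * (\<integral>\<omega>. norm (Ev T \<omega>) \<partial>M) + (1 - \<beta>) * (\<Sum>t=1..T. \<integral>\<omega>. norm (Ev t \<omega>) \<partial>M))
      \<le> D * (\<beta> * (\<sigma> / sqrt (1 - \<beta>)) + (1 - \<beta>) * (T * (\<sigma> / sqrt (1 - \<beta>))))"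
    using nT ns beta Dpos by (intro mult_left_mono add_mono) auto
  have key: "D * T * (\<integral>\<omega>. Lw \<omega> \<partial>M) \<le> (\<beta> * (\<integral>\<omega>. Rg T \<omega> \<partial>M) + (1 - \<beta>) * (\<Sum>t=1..T. \<integral>\<omega>. Rg t \<omega> \<partial>M))
      + Fs - \<mu> / 2 * Dq + D * (\<beta> * (\<sigma> / sqrt (1 - \<beta>)) + (1 - \<beta>) * (T * (\<sigma> / sqrt (1 - \<beta>)))) + \<mu> / 2 * D\<^sup>2 * T"
    using mono ILw IRw avsum noise_all by linarith
  have "(\<Sum>t=1..T. tau_prob \<beta> T t * (\<integral>\<omega>. norm (\<Sum>s=1..t. cs_q \<beta> t s *\<^sub>R gradF (cs_y x \<Delta> s \<omega>)) \<partial>M))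
      = (\<integral>\<omega>. Lw \<omega> \<partial>M)" using P unfolding Q_def .
  moreover have "(\<integral>\<omega>. Lw \<omega> \<partial>M) \<le> (\<beta> * (\<integral>\<omega>. Rg T \<omega> \<partial>M) + (1 - \<beta>) * (\<Sum>t=1..T. \<integral>\<omega>. Rg t \<omega> \<partial>M)) / (D * T)
       - \<mu> * Dq / (2 * D * T) + Fs / (D * T) + \<sigma> * \<beta> / (T * sqrt (1 - \<beta>)) + \<sigma> * sqrt (1 - \<beta>) + \<mu> * D / 2"
    by (rule fin_alg[OF Dpos _ beta(2) key]) (use T in simp)
  ultimately show ?thesis unfolding Fs_def Dq_def by simp
qed

end

theorem lemma3:
  fixes F :: "'a::euclidean_space \<Rightarrow> real"
    and gradF :: "'a \<Rightarrow> 'a"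
    and G \<sigma> \<beta> D \<mu> :: real
    and T :: nat
    and N :: "'w measure"
    and orc :: "'a \<Rightarrow> 'w \<Rightarrow> 'a"
    and A :: "nat \<Rightarrow> (nat \<Rightarrow> 'a) \<Rightarrow> 'a"
    and x \<Delta> :: "nat \<Rightarrow> (nat \<Rightarrow> real \<times> 'w) \<Rightarrow> 'a"
  defines "M \<equiv> conv_space N"
  assumes grad: "\<And>z. (F has_derivative (\<lambda>h. inner (gradF z) h)) (at z)"
    and ftc: "\<And>z v. ((\<lambda>r. inner (gradF (v + r *\<^sub>R (z - v))) (z - v)) has_integral (F z - F v)) {0..1}"
    and gradbd: "\<And>z. norm (gradF z) \<le> G"
    and N_prob: "prob_space N"
    and orc_meas: "(\<lambda>p. orc (fst p) (snd p)) \<in> borel_measurable (borel \<Otimes>\<^sub>M N)"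
    and orc_int: "\<And>z. integrable N (orc z)"
    and orc_unbiased: "\<And>z. (\<integral>\<xi>. orc z \<xi> \<partial>N) = gradF z"
    and orc_var_int: "\<And>z. integrable N (\<lambda>\<xi>. (norm (orc z \<xi> - gradF z))\<^sup>2)"
    and orc_var: "\<And>z. (\<integral>\<xi>. (norm (orc z \<xi> - gradF z))\<^sup>2 \<partial>N) \<le> \<sigma>\<^sup>2"
    and sigma: "\<sigma> \<ge> 0"
    and beta: "0 < \<beta>" "\<beta> < 1"
    and Dpos: "D > 0"
    and mu: "\<mu> \<ge> 0"
    and T: "T \<ge> 1"
    and learner: "\<And>t \<omega>. 1 \<le> t \<Longrightarrow>
        \<Delta> t \<omega> = A t (\<lambda>i. if 1 \<le> i \<and> i < t then cs_g orc x \<Delta> i \<omega> else 0)"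
    and x_adapted: "\<And>t \<omega> \<omega>'. 1 \<le> t \<Longrightarrow> (\<forall>i. 1 \<le> i \<and> i < t \<longrightarrow> \<omega> i = \<omega>' i) \<Longrightarrow>
        x t \<omega> = x t \<omega>'"
    and x_meas: "\<And>t. 1 \<le> t \<Longrightarrow> x t \<in> borel_measurable M"
    and \<Delta>_meas: "\<And>t. 1 \<le> t \<Longrightarrow> \<Delta> t \<in> borel_measurable M"
    and \<Delta>_sq_int: "\<And>t. 1 \<le> t \<Longrightarrow> t \<le> T \<Longrightarrow> integrable M (\<lambda>\<omega>. (norm (\<Delta> t \<omega>))\<^sup>2)"
  shows "(\<Sum>t=1..T. tau_prob \<beta> T t *
            (\<integral>\<omega>. norm (\<Sum>s=1..t. cs_q \<beta> t s *\<^sub>R gradF (cs_y x \<Delta> s \<omega>)) \<partial>M))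
     \<le> (\<beta> * (\<integral>\<omega>. cs_regret \<beta> \<mu> orc x \<Delta> T (cs_u D \<beta> gradF x \<Delta> T \<omega>) \<omega> \<partial>M)
          + (1 - \<beta>) * (\<Sum>t=1..T. \<integral>\<omega>. cs_regret \<beta> \<mu> orc x \<Delta> t (cs_u D \<beta> gradF x \<Delta> t \<omega>) \<omega> \<partial>M))
          / (D * T)
       - \<mu> * (\<integral>\<omega>. (\<Sum>t=1..T. (norm (\<Delta> t \<omega>))\<^sup>2) \<partial>M) / (2 * D * T)
       + (\<integral>\<omega>. (\<Sum>t=1..T. F (x t \<omega>) - F (cs_w x \<Delta> t \<omega>)) \<partial>M) / (D * T)
       + \<sigma> * \<beta> / (T * sqrt (1 - \<beta>))
       + \<sigma> * sqrt (1 - \<beta>)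
       + \<mu> * D / 2"
proof -
  have I: "cv F gradF G \<sigma> \<beta> D \<mu> T N orc A x \<Delta>"
  proof (rule cv.intro)
    show "\<And>z. (F has_derivative (\<lambda>h. inner (gradF z) h)) (at z)" by (rule grad)
    show "\<And>z v. ((\<lambda>r. inner (gradF (v + r *\<^sub>R (z - v))) (z - v)) has_integral (F z - F v)) {0..1}" by (rule ftc)
    show "\<And>z. norm (gradF z) \<le> G" by (rule gradbd)
    show "prob_space N" by (rule N_prob)
    show "(\<lambda>p. orc (fst p) (snd p)) \<in> borel_measurable (borel \<Otimes>\<^sub>M N)" by (rule orc_meas)
    show "\<And>z. integrable N (orc z)" by (rule orc_int)
    show "\<And>z. (\<integral>\<xi>. orc z \<xi> \<partial>N) = gradF z" by (rule orc_unbiased)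
    show "\<And>z. integrable N (\<lambda>\<xi>. (norm (orc z \<xi> - gradF z))\<^sup>2)" by (rule orc_var_int)
    show "\<And>z. (\<integral>\<xi>. (norm (orc z \<xi> - gradF z))\<^sup>2 \<partial>N) \<le> \<sigma>\<^sup>2" by (rule orc_var)
    show "\<sigma> \<ge> 0" by (rule sigma)
    show "\<And>t \<omega>. 1 \<le> t \<Longrightarrow> \<Delta> t \<omega> = A t (\<lambda>i. if 1 \<le> i \<and> i < t then cs_g orc x \<Delta> i \<omega> else 0)"
      by (rule learner)
    show "\<And>t \<omega> \<omega>'. 1 \<le> t \<Longrightarrow> (\<forall>i. 1 \<le> i \<and> i < t \<longrightarrow> \<omega> i = \<omega>' i) \<Longrightarrow> x t \<omega> = x t \<omega>'"
      by (rule x_adapted)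
    show "\<And>t. 1 \<le> t \<Longrightarrow> x t \<in> borel_measurable (conv_space N)" using x_meas unfolding M_def .
    show "\<And>t. 1 \<le> t \<Longrightarrow> \<Delta> t \<in> borel_measurable (conv_space N)" using \<Delta>_meas unfolding M_def .
    show "\<And>t. 1 \<le> t \<Longrightarrow> t \<le> T \<Longrightarrow> integrable (conv_space N) (\<lambda>\<omega>. (norm (\<Delta> t \<omega>))\<^sup>2)"
      using \<Delta>_sq_int unfolding M_def .
    show "0 < \<beta>" "\<beta> < 1" by (rule beta(1), rule beta(2))
    show "D > 0" by (rule Dpos)
    show "\<mu> \<ge> 0" by (rule mu)
    show "T \<ge> 1" by (rule T)
  qed
  show ?thesis using cv.main[OF I] unfolding cv.Rg_def[OF I, abs_def] M_def .
qed

end
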